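(* Let $M$ be an $n$-quasi-paving matroid of rank $n$ on $[d]$. Then $M$ is realizable over $\mathbb{C}$, and its matroid variety $V_M\subseteq\mathbb{C}^{nd}$ is irreducible.
   Context: Quasi-paving construction: given a positive integer $n\le d$ and a collection $\mathcal{H}=\{H_1,\ldots,H_k\}$ of subsets of $[d]$ any three of which have empty intersection, the $n$-quasi-paving matroid with representation $\mathcal{H}$ is the matroid on $[d]$ whose circuits are: (Type 1) the $(n-1)$-element subsets contained in the intersection of two distinct members of $\mathcal{H}$; (Type 2) the $n$-element subsets of some $H_i$ containing no Type 1 set; (Type 3) the $(n+1)$-element subsets containing no Type 1 or Type 2 set. A realization of a rank-$n$ matroid $M$ on $[d]$ is a tuple $(\gamma_1,\ldots,\gamma_d)$ of vectors in $\mathbb{C}^n$ (identified with a point of $\mathbb{C}^{nd}$) such that a set $\{i_1,\ldots,i_p\}$ is dependent in $M$ iff $\gamma_{i_1},\ldots,\gamma_{i_p}$ are linearly dependent; $\Gamma_M$ is the set of realizations and the matroid variety $V_M$ is its Zariski closure in $\mathbb{C}^{nd}$. $M$ is realizable if $\Gamma_M\neq\emptyset$. *)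

theory Defs
  imports Complex_Main
begin

definition qp_rep :: "nat \<Rightarrow> nat set set \<Rightarrow> bool" where
  "qp_rep d H \<longleftrightarrow> finite H \<and> (\<forall>A\<in>H. A \<subseteq> {1..d}) \<and>
     (\<forall>A\<in>H. \<forall>B\<in>H. \<forall>C\<in>H. A \<noteq> B \<and> B \<noteq> C \<and> A \<noteq> C \<longrightarrow> A \<inter> B \<inter> C = {})"

definition qp_type1 :: "nat \<Rightarrow> nat set set \<Rightarrow> nat set \<Rightarrow> bool" where
  "qp_type1 n H C \<longleftrightarrow> finite C \<and> card C = n - 1 \<and>
     (\<exists>A\<in>H. \<exists>B\<in>H. A \<noteq> B \<and> C \<subseteq> A \<inter> B)"

definition qp_type2 :: "nat \<Rightarrow> nat set set \<Rightarrow> nat set \<Rightarrow> bool" where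
  "qp_type2 n H C \<longleftrightarrow> finite C \<and> card C = n \<and> (\<exists>A\<in>H. C \<subseteq> A) \<and>
     \<not> (\<exists>D\<subseteq>C. qp_type1 n H D)"

definition qp_type3 :: "nat \<Rightarrow> nat \<Rightarrow> nat set set \<Rightarrow> nat set \<Rightarrow> bool" where
  "qp_type3 n d H C \<longleftrightarrow> C \<subseteq> {1..d} \<and> card C = n + 1 \<and>
     \<not> (\<exists>D\<subseteq>C. qp_type1 n H D \<or> qp_type2 n H D)"

definition qp_circuit :: "nat \<Rightarrow> nat \<Rightarrow> nat set set \<Rightarrow> nat set \<Rightarrow> bool" where
  "qp_circuit n d H C \<longleftrightarrow> qp_type1 n H C \<or> qp_type2 n H C \<or> qp_type3 n d H C"

definition qp_dependent :: "nat \<Rightarrow> nat \<Rightarrow> nat set set \<Rightarrow> nat set \<Rightarrow> bool" where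
  "qp_dependent n d H S \<longleftrightarrow> (\<exists>C\<subseteq>S. qp_circuit n d H C)"

definition circuit_matroid :: "'a set \<Rightarrow> ('a set \<Rightarrow> bool) \<Rightarrow> bool" where
  "circuit_matroid E circ \<longleftrightarrow> finite E \<and> (\<forall>C. circ C \<longrightarrow> C \<subseteq> E) \<and> \<not> circ {} \<and>
     (\<forall>C1 C2. circ C1 \<and> circ C2 \<and> C1 \<subseteq> C2 \<longrightarrow> C1 = C2) \<and>
     (\<forall>C1 C2 e. circ C1 \<and> circ C2 \<and> C1 \<noteq> C2 \<and> e \<in> C1 \<inter> C2 \<longrightarrow>
        (\<exists>C3. circ C3 \<and> C3 \<subseteq> (C1 \<union> C2) - {e}))"

definition circuit_rank :: "'a set \<Rightarrow> ('a set \<Rightarrow> bool) \<Rightarrow> nat" where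
  "circuit_rank E circ = Max {card I | I. I \<subseteq> E \<and> \<not> (\<exists>C\<subseteq>I. circ C)}"

definition qp_matroid_rank_n :: "nat \<Rightarrow> nat \<Rightarrow> nat set set \<Rightarrow> bool" where
  "qp_matroid_rank_n n d H \<longleftrightarrow> circuit_matroid {1..d} (qp_circuit n d H) \<and>
     circuit_rank {1..d} (qp_circuit n d H) = n"

text \<open>A point of C^{nd} is a function x :: nat \<times> nat \<Rightarrow> complex vanishing outside
  the index set I = {1..d} \<times> {0..<n}; x (i,j) is the j-th coordinate of the vector gamma_i.\<close>
definition idx :: "nat \<Rightarrow> nat \<Rightarrow> (nat \<times> nat) set" where
  "idx n d = {1..d} \<times> {0..<n}"

definition cspace :: "(nat \<times> nat) set \<Rightarrow> ((nat \<times> nat) \<Rightarrow> complex) set" where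
  "cspace I = {x. \<forall>k. k \<notin> I \<longrightarrow> x k = 0}"

definition lin_dep_family :: "nat \<Rightarrow> ((nat \<times> nat) \<Rightarrow> complex) \<Rightarrow> nat set \<Rightarrow> bool" where
  "lin_dep_family n x S \<longleftrightarrow>
     (\<exists>c :: nat \<Rightarrow> complex. (\<exists>i\<in>S. c i \<noteq> 0) \<and> (\<forall>j<n. (\<Sum>i\<in>S. c i * x (i, j)) = 0))"

definition qp_realizations :: "nat \<Rightarrow> nat \<Rightarrow> nat set set \<Rightarrow> ((nat \<times> nat) \<Rightarrow> complex) set" where
  "qp_realizations n d H = {x \<in> cspace (idx n d).
     \<forall>S\<subseteq>{1..d}. qp_dependent n d H S \<longleftrightarrow> lin_dep_family n x S}"

inductive_set poly_funs :: "(nat \<times> nat) set \<Rightarrow> (((nat \<times> nat) \<Rightarrow> complex) \<Rightarrow> complex) set"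
  for I where
  pconst: "(\<lambda>x. c) \<in> poly_funs I"
| pvar: "k \<in> I \<Longrightarrow> (\<lambda>x. x k) \<in> poly_funs I"
| padd: "p \<in> poly_funs I \<Longrightarrow> q \<in> poly_funs I \<Longrightarrow> (\<lambda>x. p x + q x) \<in> poly_funs I"
| pmult: "p \<in> poly_funs I \<Longrightarrow> q \<in> poly_funs I \<Longrightarrow> (\<lambda>x. p x * q x) \<in> poly_funs I"

definition zariski_closed :: "(nat \<times> nat) set \<Rightarrow> ((nat \<times> nat) \<Rightarrow> complex) set \<Rightarrow> bool" where
  "zariski_closed I V \<longleftrightarrow> (\<exists>P \<subseteq> poly_funs I. V = {x \<in> cspace I. \<forall>p\<in>P. p x = 0})"

definition zariski_closure :: "(nat \<times> nat) set \<Rightarrow> ((nat \<times> nat) \<Rightarrow> complex) set \<Rightarrow> ((nat \<times> nat) \<Rightarrow> complex) set" where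
  "zariski_closure I S = {x \<in> cspace I. \<forall>p\<in>poly_funs I. (\<forall>y\<in>S. p y = 0) \<longrightarrow> p x = 0}"

definition zariski_irreducible :: "(nat \<times> nat) set \<Rightarrow> ((nat \<times> nat) \<Rightarrow> complex) set \<Rightarrow> bool" where
  "zariski_irreducible I V \<longleftrightarrow> V \<noteq> {} \<and>
     (\<forall>A B. zariski_closed I A \<and> zariski_closed I B \<and> V \<subseteq> A \<union> B \<longrightarrow> V \<subseteq> A \<or> V \<subseteq> B)"

definition matroid_variety :: "nat \<Rightarrow> nat \<Rightarrow> nat set set \<Rightarrow> ((nat \<times> nat) \<Rightarrow> complex) set" where
  "matroid_variety n d H = zariski_closure (idx n d) (qp_realizations n d H)"

end

theory Submission
  imports Defs "HOL-Computational_Algebra.Polynomial"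
begin
lemma hom_sys:
  fixes f :: "'j \<Rightarrow> 'i \<Rightarrow> 'a::field"
  assumes "finite J" "finite S" "card J < card S"
  shows "\<exists>c. (\<exists>i\<in>S. c i \<noteq> 0) \<and> (\<forall>j\<in>J. (\<Sum>i\<in>S. c i * f j i) = 0)"
  using assms
proof (induction J arbitrary: S f rule: finite_induct)
  case empty
  then obtain i0 where "i0 \<in> S" by fastforce
  then show ?case by (intro exI[of _ "\<lambda>i. 1"]) auto
next
  case (insert j0 J S f)
  show ?case
  proof (cases "\<forall>i\<in>S. f j0 i = 0")
    case True
    have "card J < card S" using insert by simp
    then obtain c where c: "\<exists>i\<in>S. c i \<noteq> 0" "\<forall>j\<in>J. (\<Sum>i\<in>S. c i * f j i) = 0"
      using insert.IH[OF insert.prems(1)] by blast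
    show ?thesis using c True by (intro exI[of _ c]) auto
  next
    case False
    then obtain i0 where i0: "i0 \<in> S" "f j0 i0 \<noteq> 0" by blast
    define S' where "S' = S - {i0}"
    define f' where "f' = (\<lambda>j i. f j i * f j0 i0 - f j i0 * f j0 i)"
    have fS': "finite S'" using insert.prems S'_def by simp
    have cS: "card S' = card S - 1" using i0 insert.prems S'_def by simp
    have "card J < card S'" using insert cS by simp
    then obtain c' where c': "\<exists>i\<in>S'. c' i \<noteq> 0" "\<forall>j\<in>J. (\<Sum>i\<in>S'. c' i * f' j i) = 0"
      using insert.IH[OF fS'] by blast
    define c where "c = (\<lambda>i. if i = i0 then - (\<Sum>k\<in>S'. c' k * f j0 k) else c' i * f j0 i0)"
    have Ssplit: "S = insert i0 S'" using i0 S'_def by auto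
    have i0S': "i0 \<notin> S'" using S'_def by simp
    have sumS: "(\<Sum>i\<in>S. c i * g i) = c i0 * g i0 + (\<Sum>i\<in>S'. c' i * f j0 i0 * g i)" for g
    proof -
      have "(\<Sum>i\<in>S. c i * g i) = c i0 * g i0 + (\<Sum>i\<in>S'. c i * g i)"
        using Ssplit i0S' fS' by simp
      moreover have "(\<Sum>i\<in>S'. c i * g i) = (\<Sum>i\<in>S'. c' i * f j0 i0 * g i)"
        using i0S' by (intro sum.cong) (auto simp: c_def)
      ultimately show ?thesis by simp
    qed
    have nz: "\<exists>i\<in>S. c i \<noteq> 0"
    proof -
      obtain i where "i \<in> S'" "c' i \<noteq> 0" using c' by blast
      then show ?thesis using i0 S'_def by (intro bexI[of _ i]) (auto simp: c_def)
    qed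
    have eq: "\<forall>j\<in>insert j0 J. (\<Sum>i\<in>S. c i * f j i) = 0"
    proof
      fix j assume j: "j \<in> insert j0 J"
      have "(\<Sum>i\<in>S. c i * f j i) = c i0 * f j i0 + (\<Sum>i\<in>S'. c' i * f j0 i0 * f j i)"
        by (rule sumS)
      also have "\<dots> = (\<Sum>i\<in>S'. c' i * f' j i)"
        by (simp add: c_def f'_def sum_distrib_left sum_distrib_right sum_subtractf algebra_simps)
      finally have *: "(\<Sum>i\<in>S. c i * f j i) = (\<Sum>i\<in>S'. c' i * f' j i)" .
      show "(\<Sum>i\<in>S. c i * f j i) = 0"
      proof (cases "j = j0")
        case True
        then show ?thesis unfolding * by (simp add: f'_def algebra_simps)
      next
        case False
        then show ?thesis using * c' j by auto
      qed
    qed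
    show ?thesis using nz eq by blast
  qed
qed

definition ldep :: "nat \<Rightarrow> ('i \<Rightarrow> nat \<Rightarrow> complex) \<Rightarrow> 'i set \<Rightarrow> bool" where
  "ldep n v S \<longleftrightarrow> (\<exists>c. (\<exists>i\<in>S. c i \<noteq> 0) \<and> (\<forall>j<n. (\<Sum>i\<in>S. c i * v i j) = 0))"

definition dot :: "nat \<Rightarrow> (nat \<Rightarrow> complex) \<Rightarrow> (nat \<Rightarrow> complex) \<Rightarrow> complex" where
  "dot n h v = (\<Sum>j<n. h j * v j)"

definition nzv :: "nat \<Rightarrow> (nat \<Rightarrow> complex) \<Rightarrow> bool" where
  "nzv n h \<longleftrightarrow> (\<exists>k<n. h k \<noteq> 0)"

definition indep2 :: "nat \<Rightarrow> (nat \<Rightarrow> complex) \<Rightarrow> (nat \<Rightarrow> complex) \<Rightarrow> bool" where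
  "indep2 n h g \<longleftrightarrow> (\<exists>k<n. \<exists>l<n. h k * g l - h l * g k \<noteq> 0)"

lemma ldep_big:
  assumes "finite S" "n < card S"
  shows "ldep n v S"
proof -
  obtain c where "\<exists>i\<in>S. c i \<noteq> 0" "\<forall>j\<in>{..<n}. (\<Sum>i\<in>S. c i * v i j) = 0"
    using hom_sys[of "{..<n}" S "\<lambda>j i. v i j"] assms by auto
  then show ?thesis unfolding ldep_def by auto
qed

lemma ldep_mono:
  assumes "ldep n v S" "S \<subseteq> T" "finite T"
  shows "ldep n v T"
proof -
  obtain c where c: "\<exists>i\<in>S. c i \<noteq> 0" "\<forall>j<n. (\<Sum>i\<in>S. c i * v i j) = 0"
    using assms unfolding ldep_def by blast
  define c' where "c' = (\<lambda>i. if i \<in> S then c i else 0)"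
  have "(\<Sum>i\<in>T. c' i * v i j) = (\<Sum>i\<in>S. c i * v i j)" for j
  proof -
    have "(\<Sum>i\<in>T. c' i * v i j) = (\<Sum>i\<in>S. c' i * v i j)"
      using assms by (intro sum.mono_neutral_right) (auto simp: c'_def)
    also have "\<dots> = (\<Sum>i\<in>S. c i * v i j)" by (simp add: c'_def)
    finally show ?thesis .
  qed
  then show ?thesis unfolding ldep_def using c assms
    by (intro exI[of _ c']) (auto simp: c'_def)
qed

lemma dot_comb:
  "(\<Sum>j<n. h j * (\<Sum>i\<in>S. c i * v i j)) = (\<Sum>i\<in>S. c i * dot n h (v i))"
  unfolding dot_def
  by (simp add: sum_distrib_left sum_distrib_right mult.assoc mult.left_commute sum.swap[of _ S])

lemma ldep_hyp:
  assumes "finite S" "n \<le> card S" "nzv n h" "\<forall>i\<in>S. dot n h (v i) = 0"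
  shows "ldep n v S"
proof -
  obtain k where k: "k < n" "h k \<noteq> 0" using assms(3) unfolding nzv_def by blast
  have "card ({..<n} - {k}) < card S" using k assms(2) by simp
  then obtain c where c: "\<exists>i\<in>S. c i \<noteq> 0" "\<forall>j\<in>{..<n}-{k}. (\<Sum>i\<in>S. c i * v i j) = 0"
    using hom_sys[of "{..<n} - {k}" S "\<lambda>j i. v i j"] assms by auto
  define s where "s = (\<lambda>j. (\<Sum>i\<in>S. c i * v i j))"
  have "(\<Sum>j<n. h j * s j) = 0" unfolding s_def dot_comb using assms(4) by simp
  moreover have "(\<Sum>j<n. h j * s j) = h k * s k + (\<Sum>j\<in>{..<n}-{k}. h j * s j)"
    using k by (simp add: sum.remove)
  moreover have "(\<Sum>j\<in>{..<n}-{k}. h j * s j) = 0" using c(2) by (simp add: s_def)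
  ultimately have "h k * s k = 0" by simp
  then have "s k = 0" using k by simp
  then have "\<forall>j<n. s j = 0" using c(2) by (metis Diff_iff lessThan_iff s_def singletonD)
  then show ?thesis unfolding ldep_def s_def using c(1) by blast
qed

lemma ldep_codim2:
  assumes "finite S" "n \<le> card S + 1" "indep2 n h g"
    "\<forall>i\<in>S. dot n h (v i) = 0" "\<forall>i\<in>S. dot n g (v i) = 0"
  shows "ldep n v S"
proof -
  obtain k l where kl: "k < n" "l < n" "h k * g l - h l * g k \<noteq> 0"
    using assms(3) unfolding indep2_def by blast
  have kl': "k \<noteq> l" using kl by auto
  have "card ({..<n} - {k, l}) < card S" using kl kl' assms(2) by simp
  then obtain c where c: "\<exists>i\<in>S. c i \<noteq> 0" "\<forall>j\<in>{..<n}-{k,l}. (\<Sum>i\<in>S. c i * v i j) = 0"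
    using hom_sys[of "{..<n} - {k,l}" S "\<lambda>j i. v i j"] assms by auto
  define s where "s = (\<lambda>j. (\<Sum>i\<in>S. c i * v i j))"
  have split: "(\<Sum>j<n. w j * s j) = w k * s k + w l * s l" for w
  proof -
    have "(\<Sum>j<n. w j * s j) = (\<Sum>j\<in>{k,l}. w j * s j) + (\<Sum>j\<in>{..<n}-{k,l}. w j * s j)"
      using kl by (subst sum.subset_diff[of "{k,l}"]) auto
    moreover have "(\<Sum>j\<in>{..<n}-{k,l}. w j * s j) = 0" using c(2) by (simp add: s_def)
    ultimately show ?thesis using kl' by simp
  qed
  have h0: "h k * s k + h l * s l = 0"
    using split[of h] unfolding s_def dot_comb using assms(4) by simp
  have g0: "g k * s k + g l * s l = 0"
    using split[of g] unfolding s_def dot_comb using assms(5) by simp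
  have "(h k * g l - h l * g k) * s k = g l * (h k * s k + h l * s l) - h l * (g k * s k + g l * s l)"
    by (simp add: algebra_simps)
  then have "s k = 0" using h0 g0 kl by simp
  moreover have "(h k * g l - h l * g k) * s l = h k * (g k * s k + g l * s l) - g k * (h k * s k + h l * s l)"
    by (simp add: algebra_simps)
  then have "s l = 0" using h0 g0 kl by simp
  ultimately have "\<forall>j<n. s j = 0" using c(2) unfolding s_def by auto
  then show ?thesis unfolding ldep_def s_def using c(1) by blast
qed

lemma normal_exists:
  assumes "finite I" "card I < n"
  shows "\<exists>h. nzv n h \<and> (\<forall>i\<in>I. dot n h (v i) = 0)"
proof -
  obtain c where c: "\<exists>j\<in>{..<n}. c j \<noteq> 0" "\<forall>i\<in>I. (\<Sum>j\<in>{..<n}. c j * v i j) = 0"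
    using hom_sys[of I "{..<n}" "\<lambda>i j. v i j"] assms by auto
  then show ?thesis unfolding nzv_def dot_def by (intro exI[of _ c]) auto
qed

lemma two_normals:
  assumes "finite I" "card I + 1 < n"
  shows "\<exists>h g. indep2 n h g \<and> (\<forall>i\<in>I. dot n h (v i) = 0 \<and> dot n g (v i) = 0)"
proof -
  obtain h where h: "nzv n h" "\<forall>i\<in>I. dot n h (v i) = 0"
    using normal_exists[of I n v] assms by auto
  obtain k where k: "k < n" "h k \<noteq> 0" using h unfolding nzv_def by blast
  define J where "J = insert None (Some ` I)"
  define f where "f = (\<lambda>jj j. case jj of None \<Rightarrow> (if j = k then 1 else 0) | Some i \<Rightarrow> v i j)"
  have "card J \<le> card I + 1" unfolding J_def using assms
    by (metis card_image card_insert_le_m1 inj_Some le_diff_conv zero_less_one card_insert_if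
        finite_imageI le_SucI le_refl Suc_eq_plus1)
  then have "card J < card {..<n}" using assms by simp
  then obtain c where c: "\<exists>j\<in>{..<n}. c j \<noteq> 0" "\<forall>jj\<in>J. (\<Sum>j\<in>{..<n}. c j * f jj j) = 0"
    using hom_sys[of J "{..<n}" f] assms unfolding J_def by auto
  have ck: "c k = 0"
  proof -
    have "(\<Sum>j\<in>{..<n}. c j * f None j) = 0" using c(2) unfolding J_def by auto
    moreover have "(\<Sum>j\<in>{..<n}. c j * f None j) = c k"
    proof -
      have "(\<Sum>j\<in>{..<n}. c j * f None j) = (\<Sum>j\<in>{..<n}. if j = k then c j else 0)"
        by (intro sum.cong) (auto simp: f_def)
      then show ?thesis using k by simp
    qed
    ultimately show ?thesis by simp
  qed
  obtain l where l: "l < n" "c l \<noteq> 0" using c(1) by auto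
  have "h k * c l - h l * c k \<noteq> 0" using ck k l by simp
  then have "indep2 n h c" unfolding indep2_def using k l by blast
  moreover have "\<forall>i\<in>I. dot n c (v i) = 0"
    using c(2) unfolding J_def dot_def f_def by auto
  ultimately show ?thesis using h by blast
qed

lemma not_indep2_scale:
  assumes "nzv n v" "\<not> indep2 n u v"
  shows "\<exists>lam. \<forall>j<n. u j = lam * v j"
proof -
  obtain m where m: "m < n" "v m \<noteq> 0" using assms(1) unfolding nzv_def by blast
  have "\<forall>j<n. u j = (u m / v m) * v j"
  proof (intro allI impI)
    fix j assume j: "j < n"
    have "u j * v m - u m * v j = 0" using assms(2) j m unfolding indep2_def by blast
    then show "u j = (u m / v m) * v j" using m by (simp add: field_simps)
  qed
  then show ?thesis by blast
qed

lemma dot_scale: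
  assumes "\<forall>j<n. u j = lam * v j"
  shows "dot n u x = lam * dot n v x"
  unfolding dot_def using assms by (simp add: sum_distrib_left mult.assoc)

lemma indep2_trans:
  assumes "nzv n v" "\<not> indep2 n u v" "\<not> indep2 n w v"
  shows "\<not> indep2 n u w"
proof -
  obtain a where a: "\<forall>j<n. u j = a * v j" using not_indep2_scale assms by blast
  obtain b where b: "\<forall>j<n. w j = b * v j" using not_indep2_scale assms by blast
  have "u k * w l - u l * w k = 0" if "k < n" "l < n" for k l
  proof -
    have "u k * w l - u l * w k = (a * v k) * (b * v l) - (a * v l) * (b * v k)"
      using a b that by simp
    also have "\<dots> = 0" by (simp add: algebra_simps)
    finally show ?thesis .
  qed
  then show ?thesis unfolding indep2_def by blast
qed

lemma indep2_sym: "indep2 n h g \<longleftrightarrow> indep2 n g h"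
  unfolding indep2_def by (auto simp: mult.commute)

lemma max_indep_subset:
  fixes v :: "'i \<Rightarrow> nat \<Rightarrow> complex"
  assumes "finite A"
  shows "\<exists>I\<subseteq>A. \<not> ldep n v I \<and> (\<forall>e\<in>A. \<forall>h. (\<forall>i\<in>I. dot n h (v i) = 0) \<longrightarrow> dot n h (v e) = 0)"
proof -
  define F where "F = {I. I \<subseteq> A \<and> \<not> ldep n v I}"
  have "{} \<in> F" unfolding F_def ldep_def by auto
  have fF: "finite F" unfolding F_def using assms by simp
  obtain I where I: "I \<in> F" "\<forall>J\<in>F. card J \<le> card I"
  proof -
    have "\<forall>y. y \<in> F \<longrightarrow> card y < Suc (card A)"
      unfolding F_def using assms by (auto simp: card_mono le_imp_less_Suc)
    then show ?thesis using that ex_has_greatest_nat[of "\<lambda>I. I \<in> F" "{}" card "Suc (card A)"] \<open>{} \<in> F\<close>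
      by blast
  qed
  have IA: "I \<subseteq> A" "\<not> ldep n v I" using I(1) unfolding F_def by auto
  have fI: "finite I" using IA assms finite_subset by blast
  have "dot n h (v e) = 0" if e: "e \<in> A" and h: "\<forall>i\<in>I. dot n h (v i) = 0" for e h
  proof (cases "e \<in> I")
    case True then show ?thesis using h by blast
  next
    case False
    have "card (insert e I) = Suc (card I)" using False fI by simp
    then have "insert e I \<notin> F" using I(2) by (metis not_less_eq_eq order_refl)
    then have "ldep n v (insert e I)" unfolding F_def using IA e by auto
    then obtain c where c: "\<exists>i\<in>insert e I. c i \<noteq> 0" "\<forall>j<n. (\<Sum>i\<in>insert e I. c i * v i j) = 0"
      unfolding ldep_def by blast
    have sp: "(\<Sum>i\<in>insert e I. c i * v i j) = c e * v e j + (\<Sum>i\<in>I. c i * v i j)" for j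
      using False fI by simp
    have ce: "c e \<noteq> 0"
    proof
      assume ce: "c e = 0"
      then have "\<exists>i\<in>I. c i \<noteq> 0" using c(1) by auto
      moreover have "\<forall>j<n. (\<Sum>i\<in>I. c i * v i j) = 0" using c(2) sp ce by simp
      ultimately show False using IA(2) unfolding ldep_def by blast
    qed
    have "(\<Sum>j<n. h j * (\<Sum>i\<in>insert e I. c i * v i j)) = 0" using c(2) by simp
    then have "(\<Sum>i\<in>insert e I. c i * dot n h (v i)) = 0" by (simp add: dot_comb)
    then have "c e * dot n h (v e) + (\<Sum>i\<in>I. c i * dot n h (v i)) = 0" using False fI by simp
    then have "c e * dot n h (v e) = 0" using h by simp
    then show ?thesis using ce by simp
  qed
  then show ?thesis using IA by blast
qed

lemma LIpoly:
  fixes V :: "'i \<Rightarrow> complex \<Rightarrow> nat \<Rightarrow> complex"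
  assumes "finite S" "\<forall>i\<in>S. \<forall>j<n. \<exists>r. \<forall>t. V i t j = poly r t"
    "\<not> ldep n (\<lambda>i j. V i t0 j) S"
  shows "\<exists>g. poly g t0 \<noteq> 0 \<and> (\<forall>t. poly g t \<noteq> 0 \<longrightarrow> \<not> ldep n (\<lambda>i j. V i t j) S)"
  using assms
proof (induction S arbitrary: V rule: finite_induct)
  case empty
  then show ?case unfolding ldep_def by (intro exI[of _ 1]) auto
next
  case (insert i1 S V)
  have "\<exists>j0<n. V i1 t0 j0 \<noteq> 0"
  proof (rule ccontr)
    assume "\<not> ?thesis"
    moreover have "(\<Sum>i\<in>S. (if i = i1 then 1 else 0) * V i t0 j) = 0" for j
      using insert.hyps by (intro sum.neutral) auto
    ultimately have "\<forall>j<n. (\<Sum>i\<in>insert i1 S. (if i = i1 then 1 else 0) * V i t0 j) = 0"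
      using insert.hyps by simp
    moreover have "\<exists>i\<in>insert i1 S. (if i = i1 then 1 else 0::complex) \<noteq> 0" by simp
    ultimately have "ldep n (\<lambda>i j. V i t0 j) (insert i1 S)"
      unfolding ldep_def by (intro exI[of _ "\<lambda>i. if i = i1 then 1 else 0"]) simp
    then show False using insert.prems(2) by simp
  qed
  then obtain j0 where j0: "j0 < n" "V i1 t0 j0 \<noteq> 0" by blast
  obtain ra where ra: "\<forall>t. V i1 t j0 = poly ra t" using insert.prems(1) j0 by blast
  define W where "W = (\<lambda>i t j. V i1 t j0 * V i t j - V i t j0 * V i1 t j)"
  have Wp: "\<forall>i\<in>S. \<forall>j<n. \<exists>r. \<forall>t. W i t j = poly r t"
  proof (intro ballI allI impI)
    fix i j assume i: "i \<in> S" and j: "j < n"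
    obtain r1 where r1: "\<forall>t. V i t j = poly r1 t" using insert.prems(1) i j by blast
    obtain r2 where r2: "\<forall>t. V i t j0 = poly r2 t" using insert.prems(1) i j0 by blast
    obtain r3 where r3: "\<forall>t. V i1 t j = poly r3 t" using insert.prems(1) j by blast
    show "\<exists>r. \<forall>t. W i t j = poly r t"
      by (intro exI[of _ "ra * r1 - r2 * r3"]) (simp add: W_def r1 r2 r3 ra)
  qed
  have Wsum: "(\<Sum>i\<in>S. c i * W i t j) = V i1 t j0 * (\<Sum>i\<in>S. c i * V i t j) - (\<Sum>i\<in>S. c i * V i t j0) * V i1 t j" for c t j
  proof -
    have "(\<Sum>i\<in>S. c i * W i t j) = (\<Sum>i\<in>S. V i1 t j0 * (c i * V i t j) - (c i * V i t j0) * V i1 t j)"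
      by (intro sum.cong) (simp_all add: W_def algebra_simps)
    also have "\<dots> = V i1 t j0 * (\<Sum>i\<in>S. c i * V i t j) - (\<Sum>i\<in>S. c i * V i t j0) * V i1 t j"
      by (simp add: sum_subtractf sum_distrib_left sum_distrib_right)
    finally show ?thesis .
  qed
  have W0: "\<not> ldep n (\<lambda>i j. W i t0 j) S"
  proof
    assume "ldep n (\<lambda>i j. W i t0 j) S"
    then obtain c where c: "\<exists>i\<in>S. c i \<noteq> 0" "\<forall>j<n. (\<Sum>i\<in>S. c i * W i t0 j) = 0"
      unfolding ldep_def by blast
    define c' where "c' = (\<lambda>i. if i = i1 then - (\<Sum>i\<in>S. c i * V i t0 j0) else V i1 t0 j0 * c i)"
    have "(\<Sum>i\<in>insert i1 S. c' i * V i t0 j) = 0" if j: "j < n" for j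
    proof -
      have "(\<Sum>i\<in>insert i1 S. c' i * V i t0 j) = c' i1 * V i1 t0 j + (\<Sum>i\<in>S. c' i * V i t0 j)"
        using insert.hyps by simp
      also have "(\<Sum>i\<in>S. c' i * V i t0 j) = (\<Sum>i\<in>S. V i1 t0 j0 * (c i * V i t0 j))"
        using insert.hyps by (intro sum.cong) (auto simp: c'_def)
      also have "(\<Sum>i\<in>S. V i1 t0 j0 * (c i * V i t0 j)) = V i1 t0 j0 * (\<Sum>i\<in>S. c i * V i t0 j)"
        by (simp add: sum_distrib_left)
      finally have "(\<Sum>i\<in>insert i1 S. c' i * V i t0 j) = (\<Sum>i\<in>S. c i * W i t0 j)"
        unfolding Wsum by (simp add: c'_def)
      then show ?thesis using c(2) j by simp
    qed
    moreover have "\<exists>i\<in>insert i1 S. c' i \<noteq> 0"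
    proof -
      obtain i where i: "i \<in> S" "c i \<noteq> 0" using c(1) by blast
      then have "i \<noteq> i1" using insert.hyps by blast
      then have "c' i \<noteq> 0" using i j0 unfolding c'_def by simp
      then show ?thesis using i by blast
    qed
    ultimately have "ldep n (\<lambda>i j. V i t0 j) (insert i1 S)"
      unfolding ldep_def by (intro exI[of _ c']) simp
    then show False using insert.prems(2) by simp
  qed
  obtain g' where g': "poly g' t0 \<noteq> 0" "\<forall>t. poly g' t \<noteq> 0 \<longrightarrow> \<not> ldep n (\<lambda>i j. W i t j) S"
    using insert.IH[OF Wp W0] by blast
  have "\<not> ldep n (\<lambda>i j. V i t j) (insert i1 S)" if t: "poly (ra * g') t \<noteq> 0" for t
  proof
    assume "ldep n (\<lambda>i j. V i t j) (insert i1 S)"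
    then obtain c where c: "\<exists>i\<in>insert i1 S. c i \<noteq> 0" "\<forall>j<n. (\<Sum>i\<in>insert i1 S. c i * V i t j) = 0"
      unfolding ldep_def by blast
    have al: "V i1 t j0 \<noteq> 0" "poly g' t \<noteq> 0" using t ra by auto
    have sp: "\<forall>j<n. (\<Sum>i\<in>S. c i * V i t j) = - c i1 * V i1 t j"
    proof (intro allI impI)
      fix j assume "j < n"
      then have "c i1 * V i1 t j + (\<Sum>i\<in>S. c i * V i t j) = 0" using c(2) insert.hyps by simp
      then show "(\<Sum>i\<in>S. c i * V i t j) = - c i1 * V i1 t j" by (simp add: add_eq_0_iff)
    qed
    have Wz: "\<forall>j<n. (\<Sum>i\<in>S. c i * W i t j) = 0"
    proof (intro allI impI)
      fix j assume j: "j < n"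
      have "(\<Sum>i\<in>S. c i * W i t j) = V i1 t j0 * (- c i1 * V i1 t j) - (- c i1 * V i1 t j0) * V i1 t j"
        unfolding Wsum using sp j j0 by simp
      also have "\<dots> = 0" by (simp add: algebra_simps)
      finally show "(\<Sum>i\<in>S. c i * W i t j) = 0" .
    qed
    have cS: "\<forall>i\<in>S. c i = 0"
    proof (rule ballI, rule ccontr)
      fix i assume "i \<in> S" "c i \<noteq> 0"
      then have "ldep n (\<lambda>i j. W i t j) S" using Wz unfolding ldep_def by (intro exI[of _ c]) blast
      then show False using g'(2) al by blast
    qed
    then have "c i1 \<noteq> 0" using c(1) by auto
    moreover have "(\<Sum>i\<in>S. c i * V i t j0) = 0" using cS by simp
    then have "c i1 * V i1 t j0 = 0" using sp j0 by simp
    ultimately show False using al by simp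
  qed
  moreover have "poly (ra * g') t0 \<noteq> 0" using g' ra j0 by simp
  ultimately show ?case by blast
qed

datatype prm = Prm (ph: "nat set \<Rightarrow> nat \<Rightarrow> complex") (pa: "nat set \<Rightarrow> nat \<Rightarrow> complex")
  (pz: "nat \<Rightarrow> nat \<Rightarrow> complex") (pc: "nat \<Rightarrow> nat \<Rightarrow> complex")

definition lin :: "prm \<Rightarrow> prm \<Rightarrow> complex \<Rightarrow> prm" where
  "lin p q t = Prm (\<lambda>A j. ph p A j + t * (ph q A j - ph p A j))
                   (\<lambda>A j. pa p A j + t * (pa q A j - pa p A j))
                   (\<lambda>e j. pz p e j + t * (pz q e j - pz p e j))
                   (\<lambda>e j. pc p e j + t * (pc q e j - pc p e j))"

lemma lin_sel:
  "ph (lin p q t) A j = ph p A j + t * (ph q A j - ph p A j)"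
  "pa (lin p q t) A j = pa p A j + t * (pa q A j - pa p A j)"
  "pz (lin p q t) e j = pz p e j + t * (pz q e j - pz p e j)"
  "pc (lin p q t) e j = pc p e j + t * (pc q e j - pc p e j)"
  unfolding lin_def by simp_all

lemma lin_0: "lin p q 0 = p"
  unfolding lin_def by (cases p) simp

lemma lin_1: "lin p q 1 = q"
  unfolding lin_def by (cases p, cases q) simp

lemma lin_swap: "lin q p t = lin p q (1 - t)"
  unfolding lin_def by (simp add: algebra_simps)

definition pal :: "(prm \<Rightarrow> complex) \<Rightarrow> bool" where
  "pal F \<longleftrightarrow> (\<forall>p q. \<exists>r. \<forall>t. F (lin p q t) = poly r t)"

lemma pal_const: "pal (\<lambda>p. c)"
  unfolding pal_def by (intro allI exI[of _ "[:c:]"]) simp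

lemma pal_lin_coord:
  assumes "\<And>p q t. F (lin p q t) = F p + t * (F q - F p)"
  shows "pal F"
  unfolding pal_def
proof (intro allI)
  fix p q
  show "\<exists>r. \<forall>t. F (lin p q t) = poly r t"
    by (intro exI[of _ "[:F p, F q - F p:]"]) (simp add: assms algebra_simps)
qed

lemma pal_ph: "pal (\<lambda>p. ph p A j)" by (rule pal_lin_coord) (simp add: lin_sel)
lemma pal_pa: "pal (\<lambda>p. pa p A j)" by (rule pal_lin_coord) (simp add: lin_sel)
lemma pal_pz: "pal (\<lambda>p. pz p e j)" by (rule pal_lin_coord) (simp add: lin_sel)
lemma pal_pc: "pal (\<lambda>p. pc p e j)" by (rule pal_lin_coord) (simp add: lin_sel)

lemma pal_add: "pal F \<Longrightarrow> pal G \<Longrightarrow> pal (\<lambda>p. F p + G p)"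
  unfolding pal_def by (metis poly_add)

lemma pal_mult: "pal F \<Longrightarrow> pal G \<Longrightarrow> pal (\<lambda>p. F p * G p)"
  unfolding pal_def by (metis poly_mult)

lemma pal_diff: "pal F \<Longrightarrow> pal G \<Longrightarrow> pal (\<lambda>p. F p - G p)"
  unfolding pal_def by (metis poly_diff)

lemma pal_sum:
  assumes "\<forall>x\<in>X. pal (F x)"
  shows "pal (\<lambda>p. \<Sum>x\<in>X. F x p)"
proof (cases "finite X")
  case True
  then show ?thesis using assms
  proof (induction X rule: finite_induct)
    case empty then show ?case by (simp add: pal_const)
  next
    case (insert x X)
    then show ?case by (simp add: pal_add)
  qed
next
  case False
  then show ?thesis by (simp add: pal_const)
qed

lemma pal_if: "pal F \<Longrightarrow> pal G \<Longrightarrow> pal (\<lambda>p. if b then F p else G p)"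
  by (cases b) simp_all

lemma pal_zeros:
  assumes "pal F" "F (lin p q t0) \<noteq> 0"
  shows "finite {t. F (lin p q t) = 0}"
proof -
  obtain r where r: "\<forall>t. F (lin p q t) = poly r t" using assms(1) unfolding pal_def by blast
  have "r \<noteq> 0" using assms(2) r by auto
  then have "finite {t. poly r t = 0}" by (rule poly_roots_finite)
  then show ?thesis using r by simp
qed

definition lopen :: "(prm \<Rightarrow> bool) \<Rightarrow> bool" where
  "lopen Q \<longleftrightarrow> (\<forall>p q. Q p \<longrightarrow> finite {t. \<not> Q (lin p q t)})"

lemma lopen_nz: "pal F \<Longrightarrow> lopen (\<lambda>p. F p \<noteq> 0)"
  unfolding lopen_def using pal_zeros[of F _ _ 0] by (simp add: lin_0)

lemma lopen_at1:
  assumes "lopen Q" "Q q"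
  shows "finite {t. \<not> Q (lin p q t)}"
proof -
  have "finite {s. \<not> Q (lin q p s)}" using assms unfolding lopen_def by blast
  then have "finite ((\<lambda>s. 1 - s) ` {s. \<not> Q (lin q p s)})" by simp
  moreover have "{t. \<not> Q (lin p q t)} \<subseteq> (\<lambda>s. 1 - s) ` {s. \<not> Q (lin q p s)}"
  proof
    fix t assume "t \<in> {t. \<not> Q (lin p q t)}"
    then have "\<not> Q (lin q p (1 - t))" by (subst lin_swap) simp
    then show "t \<in> (\<lambda>s. 1 - s) ` {s. \<not> Q (lin q p s)}"
      by (intro image_eqI[of _ _ "1 - t"]) auto
  qed
  ultimately show ?thesis by (rule finite_subset[rotated])
qed

lemma lopen_conj:
  assumes "finite Qs" "\<forall>Q\<in>Qs. lopen Q"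
  shows "lopen (\<lambda>p. \<forall>Q\<in>Qs. Q p)"
  unfolding lopen_def
proof (intro allI impI)
  fix p q assume "\<forall>Q\<in>Qs. Q p"
  then have "\<forall>Q\<in>Qs. finite {t. \<not> Q (lin p q t)}" using assms unfolding lopen_def by blast
  then have "finite (\<Union>Q\<in>Qs. {t. \<not> Q (lin p q t)})" using assms(1) by (intro finite_UN_I) auto
  moreover have "{t. \<not> (\<forall>Q\<in>Qs. Q (lin p q t))} = (\<Union>Q\<in>Qs. {t. \<not> Q (lin p q t)})" by blast
  ultimately show "finite {t. \<not> (\<forall>Q\<in>Qs. Q (lin p q t))}" by simp
qed

lemma infinite_complex: "infinite (UNIV :: complex set)"
  by (rule infinite_UNIV_char_0)

lemma exists_good_t:
  assumes "finite B"
  shows "\<exists>t::complex. t \<notin> B"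
  using ex_new_if_finite[OF infinite_complex assms] by blast

lemma gen_machine:
  assumes "finite Qs" "\<forall>Q\<in>Qs. lopen Q" "\<forall>Q\<in>Qs. \<exists>p\<in>L. Q p" "p0 \<in> L"
    "\<And>p q t. p \<in> L \<Longrightarrow> q \<in> L \<Longrightarrow> lin p q t \<in> L"
  shows "\<exists>p\<in>L. \<forall>Q\<in>Qs. Q p"
  using assms(1-3)
proof (induction Qs rule: finite_induct)
  case empty
  then show ?case using assms(4) by blast
next
  case (insert Q0 Qs)
  obtain p where p: "p \<in> L" "\<forall>Q\<in>Qs. Q p" using insert by blast
  obtain q where q: "q \<in> L" "Q0 q" using insert.prems by blast
  have "lopen (\<lambda>p. \<forall>Q\<in>Qs. Q p)" using insert by (intro lopen_conj) auto
  then have f1: "finite {t. \<not> (\<forall>Q\<in>Qs. Q (lin p q t))}"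
    using p(2) unfolding lopen_def by blast
  have f2: "finite {t. \<not> Q0 (lin p q t)}"
    using insert.prems(1) q(2) by (intro lopen_at1[of Q0 q p]) auto
  obtain t where "t \<notin> {t. \<not> (\<forall>Q\<in>Qs. Q (lin p q t))} \<union> {t. \<not> Q0 (lin p q t)}"
    using exists_good_t[OF finite_UnI[OF f1 f2]] by blast
  then show ?case using assms(5)[OF p(1) q(1)] by blast
qed

lemma lopen_indep:
  assumes "finite S" "\<forall>i\<in>S. \<forall>j<n. pal (\<lambda>p. G p i j)"
  shows "lopen (\<lambda>p. \<not> ldep n (\<lambda>i j. G p i j) S)"
  unfolding lopen_def
proof (intro allI impI)
  fix p q assume ind: "\<not> ldep n (\<lambda>i j. G p i j) S"
  define V where "V = (\<lambda>i t j. G (lin p q t) i j)"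
  have Vp: "\<forall>i\<in>S. \<forall>j<n. \<exists>r. \<forall>t. V i t j = poly r t"
    using assms(2) unfolding pal_def V_def by blast
  have "\<not> ldep n (\<lambda>i j. V i 0 j) S" using ind by (simp add: V_def lin_0)
  then obtain g where g: "poly g 0 \<noteq> 0" "\<forall>t. poly g t \<noteq> 0 \<longrightarrow> \<not> ldep n (\<lambda>i j. V i t j) S"
    using LIpoly[OF assms(1) Vp] by blast
  have "g \<noteq> 0" using g by auto
  then have "finite {t. poly g t = 0}" by (rule poly_roots_finite)
  moreover have "{t. \<not> \<not> ldep n (\<lambda>i j. G (lin p q t) i j) S} \<subseteq> {t. poly g t = 0}"
    using g(2) unfolding V_def by blast
  ultimately show "finite {t. \<not> \<not> ldep n (\<lambda>i j. G (lin p q t) i j) S}"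
    by (rule finite_subset[rotated])
qed

lemma lopen_ex:
  assumes "\<forall>x\<in>X. lopen (Q x)"
  shows "lopen (\<lambda>p. \<exists>x\<in>X. Q x p)"
  unfolding lopen_def
proof (intro allI impI)
  fix p q assume "\<exists>x\<in>X. Q x p"
  then obtain x where x: "x \<in> X" "Q x p" by blast
  then have "finite {t. \<not> Q x (lin p q t)}" using assms unfolding lopen_def by blast
  moreover have "{t. \<not> (\<exists>x\<in>X. Q x (lin p q t))} \<subseteq> {t. \<not> Q x (lin p q t)}" using x by blast
  ultimately show "finite {t. \<not> (\<exists>x\<in>X. Q x (lin p q t))}" by (rule finite_subset[rotated])
qed

lemma lopen_nzv:
  assumes "\<forall>j<n. pal (\<lambda>p. h p j)"
  shows "lopen (\<lambda>p. nzv n (h p))"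
proof -
  have "lopen (\<lambda>p. \<exists>k\<in>{..<n}. h p k \<noteq> 0)"
    using assms by (intro lopen_ex) (simp add: lopen_nz)
  moreover have "(\<lambda>p. \<exists>k\<in>{..<n}. h p k \<noteq> 0) = (\<lambda>p. nzv n (h p))"
    unfolding nzv_def by auto
  ultimately show ?thesis by simp
qed

lemma lopen_indep2:
  assumes "\<forall>j<n. pal (\<lambda>p. h p j)" "\<forall>j<n. pal (\<lambda>p. g p j)"
  shows "lopen (\<lambda>p. indep2 n (h p) (g p))"
proof -
  have "lopen (\<lambda>p. \<exists>kl\<in>{..<n} \<times> {..<n}. h p (fst kl) * g p (snd kl) - h p (snd kl) * g p (fst kl) \<noteq> 0)"
  proof (rule lopen_ex, rule ballI)
    fix kl assume "kl \<in> {..<n} \<times> {..<n}"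
    then have "pal (\<lambda>p. h p (fst kl) * g p (snd kl) - h p (snd kl) * g p (fst kl))"
      using assms by (intro pal_diff pal_mult) auto
    then show "lopen (\<lambda>p. h p (fst kl) * g p (snd kl) - h p (snd kl) * g p (fst kl) \<noteq> 0)"
      by (rule lopen_nz)
  qed
  moreover have "(\<lambda>p. \<exists>kl\<in>{..<n} \<times> {..<n}. h p (fst kl) * g p (snd kl) - h p (snd kl) * g p (fst kl) \<noteq> 0)
      = (\<lambda>p. indep2 n (h p) (g p))"
    unfolding indep2_def by force
  ultimately show ?thesis by simp
qed

definition PP :: "nat \<Rightarrow> (nat \<Rightarrow> complex) \<Rightarrow> (nat \<Rightarrow> complex) \<Rightarrow> (nat \<Rightarrow> complex) \<Rightarrow> nat \<Rightarrow> complex" where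
  "PP n h a z = (\<lambda>j. dot n h a * z j - dot n h z * a j)"

lemma dot_lincomb: "dot n g (\<lambda>j. al * u j - be * v j) = al * dot n g u - be * dot n g v"
  unfolding dot_def by (simp add: sum_subtractf sum_distrib_left algebra_simps)

lemma dot_PP: "dot n h (PP n h a z) = 0"
  unfolding PP_def dot_lincomb by (simp add: algebra_simps)

lemma dot_PP_other: "dot n g w = 0 \<Longrightarrow> dot n g z = 0 \<Longrightarrow> dot n g (PP n h w z) = 0"
  unfolding PP_def dot_lincomb by simp

lemma PP_id: "dot n h a = 1 \<Longrightarrow> dot n h z = 0 \<Longrightarrow> PP n h a z = z"
  unfolding PP_def by simp

definition f1 :: "nat set set \<Rightarrow> nat \<Rightarrow> nat set" where
  "f1 H e = (SOME A. A \<in> H \<and> e \<in> A)"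

definition f2 :: "nat set set \<Rightarrow> nat \<Rightarrow> nat set" where
  "f2 H e = (SOME B. B \<in> H \<and> e \<in> B \<and> B \<noteq> f1 H e)"

definition has1 :: "nat set set \<Rightarrow> nat \<Rightarrow> bool" where
  "has1 H e \<longleftrightarrow> (\<exists>A\<in>H. e \<in> A)"

definition has2 :: "nat set set \<Rightarrow> nat \<Rightarrow> bool" where
  "has2 H e \<longleftrightarrow> (\<exists>B\<in>H. e \<in> B \<and> B \<noteq> f1 H e)"

lemma f1_prop: "has1 H e \<Longrightarrow> f1 H e \<in> H \<and> e \<in> f1 H e"
  unfolding has1_def f1_def by (metis (mono_tags, lifting) someI_ex)

lemma f2_prop: "has2 H e \<Longrightarrow> f2 H e \<in> H \<and> e \<in> f2 H e \<and> f2 H e \<noteq> f1 H e"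
  unfolding has2_def f2_def by (metis (mono_tags, lifting) someI_ex)

lemma has2_has1: "has2 H e \<Longrightarrow> has1 H e"
  unfolding has1_def has2_def by blast

definition gam :: "nat \<Rightarrow> nat set set \<Rightarrow> prm \<Rightarrow> nat \<Rightarrow> nat \<Rightarrow> complex" where
  "gam n H p e = (if \<not> has1 H e then pz p e
     else if \<not> has2 H e then PP n (ph p (f1 H e)) (pa p (f1 H e)) (pz p e)
     else PP n (ph p (f2 H e)) (PP n (ph p (f1 H e)) (pa p (f1 H e)) (pc p e))
               (PP n (ph p (f1 H e)) (pa p (f1 H e)) (pz p e)))"

lemma three_sets:
  assumes "qp_rep d H" "A \<in> H" "B \<in> H" "C \<in> H" "e \<in> A" "e \<in> B" "e \<in> C"
    "A \<noteq> B"
  shows "C = A \<or> C = B"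
  using assms unfolding qp_rep_def by blast

lemma gam_ker:
  assumes "qp_rep d H" "A \<in> H" "e \<in> A"
  shows "dot n (ph p A) (gam n H p e) = 0"
proof -
  have h1: "has1 H e" using assms unfolding has1_def by blast
  note F1 = f1_prop[OF h1]
  show ?thesis
  proof (cases "has2 H e")
    case False
    then have "A = f1 H e" using assms F1 unfolding has2_def by blast
    then show ?thesis using h1 False by (simp add: gam_def dot_PP)
  next
    case True
    note F2 = f2_prop[OF True]
    have "A = f1 H e \<or> A = f2 H e"
      using three_sets[of d H "f1 H e" "f2 H e" A e] assms F1 F2 by metis
    then show ?thesis
    proof
      assume A: "A = f1 H e"
      show ?thesis unfolding gam_def using h1 True A
        by (simp add: dot_PP_other dot_PP)
    next
      assume A: "A = f2 H e"
      show ?thesis unfolding gam_def using h1 True A by (simp add: dot_PP)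
    qed
  qed
qed

lemma pal_dot:
  assumes "\<forall>j. pal (\<lambda>p. h p j)" "\<forall>j. pal (\<lambda>p. v p j)"
  shows "pal (\<lambda>p. dot n (h p) (v p))"
  unfolding dot_def using assms by (intro pal_sum ballI pal_mult) auto

lemma pal_PP:
  assumes "\<forall>j. pal (\<lambda>p. h p j)" "\<forall>j. pal (\<lambda>p. a p j)" "\<forall>j. pal (\<lambda>p. z p j)"
  shows "\<forall>j. pal (\<lambda>p. PP n (h p) (a p) (z p) j)"
  unfolding PP_def using assms by (intro allI pal_diff pal_mult pal_dot) auto

lemma pal_gam: "pal (\<lambda>p. gam n H p e j)"
proof -
  have a: "\<forall>j. pal (\<lambda>p. ph p (f1 H e) j)" "\<forall>j. pal (\<lambda>p. pa p (f1 H e) j)"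
    "\<forall>j. pal (\<lambda>p. pz p e j)" "\<forall>j. pal (\<lambda>p. pc p e j)" "\<forall>j. pal (\<lambda>p. ph p (f2 H e) j)"
    by (simp_all add: pal_ph pal_pa pal_pz pal_pc)
  have b: "\<forall>j. pal (\<lambda>p. PP n (ph p (f1 H e)) (pa p (f1 H e)) (pz p e) j)"
    using a by (intro pal_PP) auto
  have c: "\<forall>j. pal (\<lambda>p. PP n (ph p (f1 H e)) (pa p (f1 H e)) (pc p e) j)"
    using a by (intro pal_PP) auto
  have d: "\<forall>j. pal (\<lambda>p. PP n (ph p (f2 H e)) (PP n (ph p (f1 H e)) (pa p (f1 H e)) (pc p e))
               (PP n (ph p (f1 H e)) (pa p (f1 H e)) (pz p e)) j)"
    using a b c by (intro pal_PP) auto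
  show ?thesis unfolding gam_def using a b d by (cases "has1 H e"; cases "has2 H e") auto
qed

definition phi :: "nat \<Rightarrow> nat \<Rightarrow> nat set set \<Rightarrow> prm \<Rightarrow> nat \<times> nat \<Rightarrow> complex" where
  "phi n d H p = (\<lambda>(i, j). if (i, j) \<in> idx n d then gam n H p i j else 0)"

lemma pal_phi: "pal (\<lambda>p. phi n d H p k)"
  unfolding phi_def by (cases k) (auto intro: pal_if pal_gam pal_const)

lemma phi_cspace: "phi n d H p \<in> cspace (idx n d)"
  unfolding cspace_def phi_def by auto

lemma gam_exact:
  assumes "qp_rep d H"
    "\<forall>A\<in>H. e \<in> A \<longrightarrow> dot n (ph p A) (pz p e) = 0"
    "\<forall>A\<in>H. e \<in> A \<longrightarrow> dot n (ph p A) (pa p A) = 1"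
    "has2 H e \<longrightarrow> dot n (ph p (f1 H e)) (pc p e) = 0 \<and> dot n (ph p (f2 H e)) (pc p e) = 1"
  shows "gam n H p e = pz p e"
proof (cases "has1 H e")
  case False
  then show ?thesis by (simp add: gam_def)
next
  case h1: True
  note F1 = f1_prop[OF h1]
  have z1: "PP n (ph p (f1 H e)) (pa p (f1 H e)) (pz p e) = pz p e"
    using assms F1 by (intro PP_id) auto
  show ?thesis
  proof (cases "has2 H e")
    case False
    then show ?thesis using h1 z1 by (simp add: gam_def)
  next
    case True
    note F2 = f2_prop[OF True]
    have c1: "PP n (ph p (f1 H e)) (pa p (f1 H e)) (pc p e) = pc p e"
      using assms F1 True by (intro PP_id) auto
    have "PP n (ph p (f2 H e)) (pc p e) (pz p e) = pz p e"
      using assms F2 True by (intro PP_id) auto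
    then show ?thesis using h1 True z1 c1 by (simp add: gam_def)
  qed
qed

lemma exists_a: "nzv n h \<Longrightarrow> \<exists>a. dot n h a = 1"
proof -
  assume "nzv n h"
  then obtain k where k: "k < n" "h k \<noteq> 0" unfolding nzv_def by blast
  have "dot n h (\<lambda>j. if j = k then 1 / h k else 0) = (\<Sum>j<n. if j = k then 1 else 0)"
    unfolding dot_def using k by (intro sum.cong) auto
  also have "\<dots> = 1" using k by simp
  finally show ?thesis by blast
qed

lemma exists_c: "indep2 n h g \<Longrightarrow> \<exists>c. dot n h c = 0 \<and> dot n g c = 1"
proof -
  assume "indep2 n h g"
  then obtain k l where kl: "k < n" "l < n" "h k * g l - h l * g k \<noteq> 0"
    unfolding indep2_def by blast
  define m where "m = h k * g l - h l * g k"
  have kl': "k \<noteq> l" using kl by auto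
  define c where "c = (\<lambda>j. ((if j = l then h k else 0) - (if j = k then h l else 0)) / m)"
  have dc: "dot n w c = (w l * h k - w k * h l) / m" for w
  proof -
    have "dot n w c = (\<Sum>j<n. (if j = l then w l * h k / m else 0) - (if j = k then w k * h l / m else 0))"
      unfolding dot_def c_def by (intro sum.cong) (auto simp: field_simps)
    also have "\<dots> = w l * h k / m - w k * h l / m"
      using kl by (simp add: sum_subtractf)
    finally show ?thesis by (simp add: diff_divide_distrib)
  qed
  have "dot n h c = 0" unfolding dc by simp
  moreover have "dot n g c = 1" unfolding dc using kl unfolding m_def by (simp add: algebra_simps)
  ultimately show ?thesis by blast
qed

lemma rep3:
  assumes "qp_rep d H" "A \<in> H" "B \<in> H" "C \<in> H" "A \<noteq> B" "B \<noteq> C" "A \<noteq> C"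
  shows "A \<inter> B \<inter> C = {}"
  using assms unfolding qp_rep_def by (metis (no_types, lifting))

lemma qp_dep_mono: "qp_dependent n d H S \<Longrightarrow> S \<subseteq> T \<Longrightarrow> qp_dependent n d H T"
  unfolding qp_dependent_def by blast

lemma circ_dep: "qp_circuit n d H C \<Longrightarrow> qp_dependent n d H C"
  unfolding qp_dependent_def by blast

lemma dep_type1:
  assumes "A \<in> H" "B \<in> H" "A \<noteq> B" "T \<subseteq> A \<inter> B" "finite T" "card T = n - 1"
  shows "qp_dependent n d H T"
  using assms unfolding qp_dependent_def qp_circuit_def qp_type1_def by blast

lemma dep_n_subset:
  assumes "A \<in> H" "T \<subseteq> A" "finite T" "card T = n"
  shows "qp_dependent n d H T"
proof (cases "\<exists>D\<subseteq>T. qp_type1 n H D")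
  case True
  then show ?thesis unfolding qp_dependent_def qp_circuit_def by blast
next
  case False
  then have "qp_type2 n H T" using assms unfolding qp_type2_def by blast
  then show ?thesis unfolding qp_dependent_def qp_circuit_def by blast
qed

lemma dep_big:
  assumes "T \<subseteq> {1..d}" "card T = n + 1"
  shows "qp_dependent n d H T"
proof (cases "\<exists>D\<subseteq>T. qp_type1 n H D \<or> qp_type2 n H D")
  case True
  then show ?thesis unfolding qp_dependent_def qp_circuit_def by blast
next
  case False
  then have "qp_type3 n d H T" using assms unfolding qp_type3_def by blast
  then show ?thesis unfolding qp_dependent_def qp_circuit_def by blast
qed

lemma indep_card:
  assumes "S \<subseteq> {1..d}" "\<not> qp_dependent n d H S"
  shows "card S \<le> n"
proof (rule ccontr)
  assume "\<not> card S \<le> n"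
  then obtain T where T: "T \<subseteq> S" "card T = n + 1"
    by (metis Suc_eq_plus1 not_less_eq_eq obtain_subset_with_card_n)
  then have "qp_dependent n d H T" using assms by (intro dep_big) auto
  then show False using assms T qp_dep_mono by blast
qed

lemma indep_A:
  assumes "S \<subseteq> {1..d}" "\<not> qp_dependent n d H S" "A \<in> H"
  shows "card (S \<inter> A) < n"
proof (rule ccontr)
  assume "\<not> card (S \<inter> A) < n"
  then obtain T where T: "T \<subseteq> S \<inter> A" "card T = n"
    by (meson not_less obtain_subset_with_card_n)
  have fT: "finite T" using T assms(1) by (meson finite_atLeastAtMost finite_subset inf.coboundedI1 le_inf_iff)
  have "qp_dependent n d H T" using T fT assms by (intro dep_n_subset[of A]) auto
  then show False using assms T qp_dep_mono by blast
qed

lemma indep_AB: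
  assumes "S \<subseteq> {1..d}" "\<not> qp_dependent n d H S" "A \<in> H" "B \<in> H" "A \<noteq> B"
  shows "card (S \<inter> A \<inter> B) + 1 < n"
proof (rule ccontr)
  assume "\<not> card (S \<inter> A \<inter> B) + 1 < n"
  then have "n - 1 \<le> card (S \<inter> A \<inter> B)" by simp
  then obtain T where T: "T \<subseteq> S \<inter> A \<inter> B" "card T = n - 1"
    by (meson obtain_subset_with_card_n)
  have fT: "finite T" using T assms(1) by (meson finite_atLeastAtMost finite_subset inf.coboundedI1 le_inf_iff)
  have "qp_dependent n d H T" using T fT assms by (intro dep_type1[of A H B]) auto
  then show False using assms T qp_dep_mono by blast
qed

lemma comb_lemma:
  assumes rep: "qp_rep d H" and AB: "A \<in> H" "B \<in> H" "A \<noteq> B"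
    and IA: "IA \<subseteq> A" "\<not> qp_dependent n d H IA" "card IA = n - 1"
    and IB: "IB \<subseteq> B" "\<not> qp_dependent n d H IB" "card IB = n - 1"
    and n1: "1 \<le> n"
  shows "\<exists>e\<in>IB - A. \<not> qp_dependent n d H (insert e IA)"
proof -
  have fin: "finite A" "finite B" using rep AB unfolding qp_rep_def
    by (meson finite_atLeastAtMost finite_subset)+
  have fIA: "finite IA" "finite IB" using fin IA IB finite_subset by blast+
  have "\<not> IB \<subseteq> A"
  proof
    assume "IB \<subseteq> A"
    then have "qp_dependent n d H IB" using AB IB fIA by (intro dep_type1[of A H B]) auto
    then show False using IB by blast
  qed
  then obtain e where e: "e \<in> IB" "e \<notin> A" by blast
  have eIA: "e \<notin> IA" using e IA by blast
  have cardI: "card (insert e IA) = n" using eIA fIA IA n1 by simp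
  have "\<not> qp_dependent n d H (insert e IA)"
  proof
    assume "qp_dependent n d H (insert e IA)"
    then obtain C where C: "C \<subseteq> insert e IA" "qp_circuit n d H C" unfolding qp_dependent_def by blast
    have eC: "e \<in> C"
    proof (rule ccontr)
      assume "e \<notin> C"
      then have "C \<subseteq> IA" using C by blast
      then show False using C IA unfolding qp_dependent_def by blast
    qed
    have fC: "finite C" using C fIA finite_subset by blast
    consider "qp_type1 n H C" | "qp_type2 n H C" | "qp_type3 n d H C"
      using C unfolding qp_circuit_def by blast
    then show False
    proof cases
      case 1
      then obtain K L where KL: "K \<in> H" "L \<in> H" "K \<noteq> L" "C \<subseteq> K \<inter> L"
        unfolding qp_type1_def by blast
      show False
      proof (cases "C = {e}")
        case True
        then have "C \<subseteq> IB" using e by blast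
        then show False using C IB unfolding qp_dependent_def by blast
      next
        case False
        then obtain f where f: "f \<in> C" "f \<noteq> e" using eC by blast
        then have "f \<in> IA" using C by blast
        then have "f \<in> A" using IA by blast
        moreover have "A \<noteq> K" "A \<noteq> L" using KL eC e by blast+
        moreover have "f \<in> K" "f \<in> L" using f KL by blast+
        ultimately show False using rep3[OF rep AB(1) KL(1) KL(2)] KL(3) by blast
      qed
    next
      case 2
      then obtain K where K: "K \<in> H" "C \<subseteq> K" "card C = n" unfolding qp_type2_def by blast
      have "C = insert e IA"
        using C(1) K(3) cardI fIA(1) by (intro card_subset_eq) auto
      then have "IA \<subseteq> A \<inter> K" using IA K by blast
      moreover have "A \<noteq> K" using K eC e by blast
      ultimately have "qp_dependent n d H IA" using AB K fIA IA by (intro dep_type1[of A H K]) auto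
      then show False using IA by blast
    next
      case 3
      then have "card C = n + 1" unfolding qp_type3_def by blast
      moreover have "card C \<le> card (insert e IA)" using C fIA by (intro card_mono) auto
      ultimately show False using cardI by simp
    qed
  qed
  then show ?thesis using e by blast
qed

definition ND :: "nat \<Rightarrow> nat set set \<Rightarrow> prm \<Rightarrow> bool" where
  "ND n H p \<longleftrightarrow> (\<forall>A\<in>H. nzv n (ph p A)) \<and> (\<forall>A\<in>H. \<forall>B\<in>H. A \<noteq> B \<longrightarrow> indep2 n (ph p A) (ph p B))"

lemma circuit_ldep:
  assumes rep: "qp_rep d H" and ne: "\<not> qp_circuit n d H {}" and nd: "ND n H p"
    and C: "qp_circuit n d H C"
  shows "ldep n (gam n H p) C"
proof -
  consider "qp_type1 n H C" | "qp_type2 n H C" | "qp_type3 n d H C"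
    using C unfolding qp_circuit_def by blast
  then show ?thesis
  proof cases
    case 1
    then obtain A B where AB: "A \<in> H" "B \<in> H" "A \<noteq> B" "C \<subseteq> A \<inter> B" "finite C" "card C = n - 1"
      unfolding qp_type1_def by blast
    have "C \<noteq> {}" using C ne by blast
    then have "card C > 0" using AB(5) by (simp add: card_gt_0_iff)
    then have "n \<le> card C + 1" using AB(6) by linarith
    moreover have "indep2 n (ph p A) (ph p B)" using nd AB unfolding ND_def by blast
    moreover have "\<forall>i\<in>C. dot n (ph p A) (gam n H p i) = 0"
      using AB(1,4) gam_ker[OF rep] by blast
    moreover have "\<forall>i\<in>C. dot n (ph p B) (gam n H p i) = 0"
      using AB(2,4) gam_ker[OF rep] by blast
    ultimately show ?thesis using AB(5)
      by (intro ldep_codim2[of C n "ph p A" "ph p B"])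
  next
    case 2
    then obtain A where A: "A \<in> H" "C \<subseteq> A" "finite C" "card C = n"
      unfolding qp_type2_def by blast
    have "nzv n (ph p A)" using nd A unfolding ND_def by blast
    moreover have "\<forall>i\<in>C. dot n (ph p A) (gam n H p i) = 0"
      using A(1,2) gam_ker[OF rep] by blast
    ultimately show ?thesis using A(3,4)
      by (intro ldep_hyp[of C n "ph p A"]) auto
  next
    case 3
    then have C3: "C \<subseteq> {1..d} \<and> card C = n + 1" unfolding qp_type3_def by (elim conjE) (intro conjI)
    then have "C \<subseteq> {1..d}" "card C = n + 1" by simp_all
    moreover have "finite C" using \<open>C \<subseteq> {1..d}\<close> by (rule finite_subset) simp
    ultimately show ?thesis by (intro ldep_big) auto
  qed
qed

lemma dep_ldep:
  assumes rep: "qp_rep d H" and ne: "\<not> qp_circuit n d H {}" and nd: "ND n H p"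
    and S: "S \<subseteq> {1..d}" "qp_dependent n d H S"
  shows "ldep n (gam n H p) S"
proof -
  obtain C where C: "C \<subseteq> S" "qp_circuit n d H C" using S unfolding qp_dependent_def by blast
  then have l: "ldep n (gam n H p) C" using circuit_ldep[OF rep ne nd] by blast
  have f: "finite S" using S(1) by (rule finite_subset) simp
  show ?thesis by (rule ldep_mono[OF l C(1) f])
qed

definition good :: "nat \<Rightarrow> nat \<Rightarrow> nat set set \<Rightarrow> prm \<Rightarrow> bool" where
  "good n d H p \<longleftrightarrow> ND n H p \<and>
     (\<forall>S. S \<subseteq> {1..d} \<and> \<not> qp_dependent n d H S \<longrightarrow> \<not> ldep n (gam n H p) S)"

lemma ldep_cong:
  assumes "\<forall>i\<in>S. \<forall>j<n. v i j = w i j"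
  shows "ldep n v S = ldep n w S"
proof -
  have "(\<Sum>i\<in>S. c i * v i j) = (\<Sum>i\<in>S. c i * w i j)" if "j < n" for c j
    using assms that by (intro sum.cong) auto
  then have "(\<forall>j<n. (\<Sum>i\<in>S. c i * v i j) = 0) = (\<forall>j<n. (\<Sum>i\<in>S. c i * w i j) = 0)" for c
    by simp
  then show ?thesis unfolding ldep_def by simp
qed

lemma lin_dep_phi:
  assumes "S \<subseteq> {1..d}"
  shows "lin_dep_family n (phi n d H p) S = ldep n (gam n H p) S"
proof -
  have "lin_dep_family n (phi n d H p) S = ldep n (\<lambda>i j. phi n d H p (i, j)) S"
    unfolding lin_dep_family_def ldep_def by simp
  also have "\<dots> = ldep n (gam n H p) S"
    using assms by (intro ldep_cong) (auto simp: phi_def idx_def)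
  finally show ?thesis .
qed

lemma good_real:
  assumes rep: "qp_rep d H" and ne: "\<not> qp_circuit n d H {}" and g: "good n d H p"
  shows "phi n d H p \<in> qp_realizations n d H"
  unfolding qp_realizations_def
proof (intro CollectI conjI phi_cspace allI impI)
  fix S assume S: "S \<subseteq> {1..d}"
  show "qp_dependent n d H S = lin_dep_family n (phi n d H p) S"
    unfolding lin_dep_phi[OF S]
  proof
    assume "qp_dependent n d H S"
    then show "ldep n (gam n H p) S" using dep_ldep[OF rep ne _ S] g unfolding good_def by blast
  next
    assume "ldep n (gam n H p) S"
    then show "qp_dependent n d H S" using g S unfolding good_def by blast
  qed
qed

definition NDconds :: "nat \<Rightarrow> nat set set \<Rightarrow> (prm \<Rightarrow> bool) set" where
  "NDconds n H = (\<lambda>A p. nzv n (ph p A)) ` H \<union>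
     (\<lambda>AB p. indep2 n (ph p (fst AB)) (ph p (snd AB))) ` {AB. fst AB \<in> H \<and> snd AB \<in> H \<and> fst AB \<noteq> snd AB}"

definition INconds :: "nat \<Rightarrow> nat \<Rightarrow> nat set set \<Rightarrow> (prm \<Rightarrow> bool) set" where
  "INconds n d H = (\<lambda>S p. \<not> ldep n (gam n H p) S) ` {S. S \<subseteq> {1..d} \<and> \<not> qp_dependent n d H S}"

lemma ND_iff: "ND n H p \<longleftrightarrow> (\<forall>Q\<in>NDconds n H. Q p)"
proof -
  have "(\<forall>AB\<in>{AB. fst AB \<in> H \<and> snd AB \<in> H \<and> fst AB \<noteq> snd AB}. indep2 n (ph p (fst AB)) (ph p (snd AB)))
     = (\<forall>A\<in>H. \<forall>B\<in>H. A \<noteq> B \<longrightarrow> indep2 n (ph p A) (ph p B))" (is "?L = ?R")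
  proof
    assume L: ?L
    show ?R
    proof (intro ballI impI)
      fix A B assume "A \<in> H" "B \<in> H" "A \<noteq> B"
      then show "indep2 n (ph p A) (ph p B)" using bspec[OF L, of "(A, B)"] by simp
    qed
  next
    assume R: ?R
    show ?L
    proof
      fix AB assume "AB \<in> {AB. fst AB \<in> H \<and> snd AB \<in> H \<and> fst AB \<noteq> snd AB}"
      then show "indep2 n (ph p (fst AB)) (ph p (snd AB))" using R by blast
    qed
  qed
  moreover have "(\<forall>Q\<in>NDconds n H. Q p) = ((\<forall>A\<in>H. nzv n (ph p A)) \<and> ?L)"
    unfolding NDconds_def ball_Un by simp
  ultimately show ?thesis unfolding ND_def by simp
qed

lemma good_iff: "good n d H p \<longleftrightarrow> (\<forall>Q\<in>NDconds n H \<union> INconds n d H. Q p)"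
  unfolding good_def ND_iff INconds_def ball_Un by simp

lemma finite_NDconds: "qp_rep d H \<Longrightarrow> finite (NDconds n H)"
proof -
  assume "qp_rep d H"
  then have fH: "finite H" unfolding qp_rep_def by blast
  have "{AB. fst AB \<in> H \<and> snd AB \<in> H \<and> fst AB \<noteq> snd AB} \<subseteq> H \<times> H" by auto
  then have "finite {AB. fst AB \<in> H \<and> snd AB \<in> H \<and> fst AB \<noteq> snd AB}"
    by (rule finite_subset) (simp add: fH)
  then show ?thesis unfolding NDconds_def using fH by simp
qed

lemma finite_INconds: "finite (INconds n d H)"
proof -
  have "{S. S \<subseteq> {1..d} \<and> \<not> qp_dependent n d H S} \<subseteq> Pow {1..d}" by auto
  then have "finite {S. S \<subseteq> {1..d} \<and> \<not> qp_dependent n d H S}" by (rule finite_subset) simp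
  then show ?thesis unfolding INconds_def by simp
qed

lemma lopen_NDconds: "\<forall>Q\<in>NDconds n H. lopen Q"
proof -
  have "lopen (\<lambda>p. nzv n (ph p A))" for A by (rule lopen_nzv) (simp add: pal_ph)
  moreover have "lopen (\<lambda>p. indep2 n (ph p A) (ph p B))" for A B
    by (rule lopen_indep2) (simp_all add: pal_ph)
  ultimately show ?thesis unfolding NDconds_def by auto
qed

lemma lopen_INconds: "\<forall>Q\<in>INconds n d H. lopen Q"
proof
  fix Q assume "Q \<in> INconds n d H"
  then obtain S where S: "S \<subseteq> {1..d}" "Q = (\<lambda>p. \<not> ldep n (gam n H p) S)"
    unfolding INconds_def by blast
  have "finite S" using S(1) by (rule finite_subset) simp
  then have "lopen (\<lambda>p. \<not> ldep n (\<lambda>i j. gam n H p i j) S)"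
    by (rule lopen_indep) (simp add: pal_gam)
  then show "lopen Q" using S(2) by simp
qed

lemma lopen_good: "qp_rep d H \<Longrightarrow> lopen (good n d H)"
proof -
  assume rep: "qp_rep d H"
  have "lopen (\<lambda>p. \<forall>Q\<in>NDconds n H \<union> INconds n d H. Q p)"
    using lopen_NDconds lopen_INconds finite_NDconds[OF rep] finite_INconds
    by (intro lopen_conj) auto
  moreover have "good n d H = (\<lambda>p. \<forall>Q\<in>NDconds n H \<union> INconds n d H. Q p)"
    by (rule ext, rule good_iff)
  ultimately show ?thesis by simp
qed

lemma lin_ph: "ph (lin p q t) A k = ph p A k + t * (ph q A k - ph p A k)"
  by (simp add: lin_sel)

lemma std_indep:
  assumes "finite S" "inj_on sg S" "\<forall>e\<in>S. sg e < n"
    "\<forall>e\<in>S. \<forall>j. v e j = (if j = sg e then 1 else 0)"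
  shows "\<not> ldep n v S"
proof
  assume "ldep n v S"
  then obtain c where c: "\<exists>i\<in>S. c i \<noteq> 0" "\<forall>j<n. (\<Sum>i\<in>S. c i * v i j) = 0"
    unfolding ldep_def by blast
  obtain e0 where e0: "e0 \<in> S" "c e0 \<noteq> 0" using c(1) by blast
  have "(\<Sum>i\<in>S. c i * v i (sg e0)) = (\<Sum>i\<in>S. if i = e0 then c i else 0)"
  proof (rule sum.cong[OF refl])
    fix i assume i: "i \<in> S"
    have "sg e0 = sg i \<longleftrightarrow> i = e0" using inj_on_eq_iff[OF assms(2) e0(1) i] by auto
    then show "c i * v i (sg e0) = (if i = e0 then c i else 0)"
      using i assms(4) by simp
  qed
  also have "\<dots> = c e0" using e0(1) assms(1) by simp
  finally have "(\<Sum>i\<in>S. c i * v i (sg e0)) = c e0" .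
  moreover have "sg e0 < n" using assms(3) e0(1) by blast
  then have "(\<Sum>i\<in>S. c i * v i (sg e0)) = 0" using c(2) by blast
  ultimately show False using e0(2) by simp
qed

lemma two_free:
  fixes X :: "nat set"
  assumes "X \<subseteq> {..<n}" "card X + 1 < n"
  shows "\<exists>k1 k2. k1 < n \<and> k2 < n \<and> k1 \<notin> X \<and> k2 \<notin> X \<and> k1 \<noteq> k2"
proof -
  have fX: "finite X" using assms(1) by (rule finite_subset) simp
  have "card ({..<n} - X) = n - card X" using assms(1) fX by (simp add: card_Diff_subset)
  then have c2: "2 \<le> card ({..<n} - X)" using assms(2) by simp
  obtain T where T: "T \<subseteq> {..<n} - X" "card T = 2"
    using obtain_subset_with_card_n[OF c2] by metis
  then obtain k1 k2 where k: "T = {k1, k2}" "k1 \<noteq> k2" unfolding card_2_iff by blast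
  have "k1 \<in> {..<n} - X" "k2 \<in> {..<n} - X" using T(1) k(1) by auto
  then show ?thesis using k(2) by blast
qed

lemma one_free:
  fixes X :: "nat set"
  assumes "X \<subseteq> {..<n}" "card X < n"
  shows "\<exists>k. k < n \<and> k \<notin> X"
proof (rule ccontr)
  assume "\<not> ?thesis"
  then have "{..<n} \<subseteq> X" by auto
  then have "X = {..<n}" using assms(1) by (rule subset_antisym[rotated])
  then show False using assms(2) by simp
qed

lemma indep_witness:
  assumes rep: "qp_rep d H" and S: "S \<subseteq> {1..d}" "\<not> qp_dependent n d H S"
  shows "\<exists>p. \<not> ldep n (gam n H p) S"
proof -
  have fS: "finite S" using S(1) by (rule finite_subset) simp
  have fH: "finite H" using rep unfolding qp_rep_def by blast
  obtain sg where sg: "bij_betw sg S {0..<card S}" using ex_bij_betw_finite_nat[OF fS] by blast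
  have cS: "card S \<le> n" using indep_card[OF S] .
  have "\<forall>e\<in>S. sg e \<in> {0..<card S}" using bij_betwE[OF sg] .
  then have sgn: "\<forall>e\<in>S. sg e < n" using cS by auto
  have sginj: "inj_on sg S" using sg bij_betw_def by blast
  define K where "K = (\<lambda>A. {..<n} - sg ` (S \<inter> A))"
  have imgsub: "sg ` (S \<inter> A) \<subseteq> {..<n}" for A using sgn by auto
  have cimg: "card (sg ` (S \<inter> A)) = card (S \<inter> A)" for A
    by (rule card_image[OF inj_on_subset[OF sginj]]) auto
  have KA: "\<exists>k. k \<in> K A" if A: "A \<in> H" for A
  proof -
    have "card (sg ` (S \<inter> A)) < n" using cimg indep_A[OF S A] by simp
    then obtain k where "k < n" "k \<notin> sg ` (S \<inter> A)" using one_free[OF imgsub] by blast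
    then show ?thesis unfolding K_def by blast
  qed
  have KAB: "\<exists>k l. k \<in> K A \<and> l \<in> K B \<and> k \<noteq> l" if AB: "A \<in> H" "B \<in> H" "A \<noteq> B" for A B
  proof -
    have "card (sg ` (S \<inter> A \<inter> B)) = card (S \<inter> A \<inter> B)"
      by (rule card_image[OF inj_on_subset[OF sginj]]) auto
    then have c1: "card (sg ` (S \<inter> A \<inter> B)) + 1 < n"
      using indep_AB[OF S AB] by simp
    have s1: "sg ` (S \<inter> A \<inter> B) \<subseteq> {..<n}" using sgn by auto
    obtain k1 k2 where k12: "k1 < n" "k2 < n" "k1 \<notin> sg ` (S \<inter> A \<inter> B)"
      "k2 \<notin> sg ` (S \<inter> A \<inter> B)" "k1 \<noteq> k2"
      using two_free[OF s1 c1] by blast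
    have inAB: "k \<in> K A \<or> k \<in> K B" if kk: "k < n" "k \<notin> sg ` (S \<inter> A \<inter> B)" for k
    proof (rule ccontr)
      assume "\<not> (k \<in> K A \<or> k \<in> K B)"
      then obtain e1 e2 where e: "e1 \<in> S \<inter> A" "k = sg e1" "e2 \<in> S \<inter> B" "k = sg e2"
        using kk(1) unfolding K_def by blast
      then have "e1 = e2" using inj_on_eq_iff[OF sginj, of e1 e2] by auto
      then show False using e kk(2) by blast
    qed
    obtain l where l: "l \<in> K B" using KA[OF AB(2)] by blast
    obtain k' where k': "k' < n" "k' \<notin> sg ` (S \<inter> A \<inter> B)" "k' \<noteq> l"
      using k12 by metis
    show ?thesis
    proof (cases "k' \<in> K A")
      case True
      then show ?thesis using l k' by blast
    next
      case False
      then have "k' \<in> K B" using inAB k' by blast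
      obtain k where k: "k \<in> K A" using KA[OF AB(1)] by blast
      then have "k \<noteq> k'" using False by blast
      then show ?thesis using k \<open>k' \<in> K B\<close> by blast
    qed
  qed
  define L where "L = {p. \<forall>A\<in>H. \<forall>k. k \<notin> K A \<longrightarrow> ph p A k = 0}"
  have Lclosed: "lin p q t \<in> L" if "p \<in> L" "q \<in> L" for p q t
    using that unfolding L_def by (simp add: lin_ph)
  define z0 where "z0 = (\<lambda>(e::nat) (j::nat). 0::complex)"
  define a0 where "a0 = (\<lambda>(A::nat set) (j::nat). 0::complex)"
  have p0: "Prm a0 a0 z0 z0 \<in> L" unfolding L_def a0_def by simp
  have wit: "\<forall>Q\<in>NDconds n H. \<exists>p\<in>L. Q p"
  proof
    fix Q assume "Q \<in> NDconds n H"
    then consider (one) A where "A \<in> H" "Q = (\<lambda>p. nzv n (ph p A))"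
      | (two) A B where "A \<in> H" "B \<in> H" "A \<noteq> B" "Q = (\<lambda>p. indep2 n (ph p A) (ph p B))"
      unfolding NDconds_def by auto
    then show "\<exists>p\<in>L. Q p"
    proof cases
      case one
      obtain k where k: "k \<in> K A" using KA[OF one(1)] by blast
      define p where "p = Prm (\<lambda>C j. if C = A \<and> j = k then 1 else 0) a0 z0 z0"
      have "p \<in> L" unfolding L_def p_def using k by auto
      moreover have "nzv n (ph p A)" unfolding p_def nzv_def using k unfolding K_def by auto
      ultimately show ?thesis using one by blast
    next
      case two
      obtain k l where kl: "k \<in> K A" "l \<in> K B" "k \<noteq> l" using KAB[OF two(1-3)] by blast
      define p where "p = Prm (\<lambda>C j. if C = A \<and> j = k then 1 else if C = B \<and> j = l then 1 else 0) a0 z0 z0"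
      have "p \<in> L" unfolding L_def p_def using kl by auto
      moreover have "indep2 n (ph p A) (ph p B)"
        unfolding indep2_def p_def using kl two(3) unfolding K_def
        by (intro exI[of _ k] exI[of _ l]) auto
      ultimately show ?thesis using two by blast
    qed
  qed
  obtain hp where hp: "hp \<in> L" "\<forall>Q\<in>NDconds n H. Q hp"
    using gen_machine[OF finite_NDconds[OF rep] lopen_NDconds wit p0 Lclosed] by blast
  have nd: "ND n H hp" using hp(2) ND_iff by blast
  define aa where "aa = (\<lambda>A. SOME a. dot n (ph hp A) a = 1)"
  define cc where "cc = (\<lambda>e. SOME c. dot n (ph hp (f1 H e)) c = 0 \<and> dot n (ph hp (f2 H e)) c = 1)"
  define zz where "zz = (\<lambda>e j. if e \<in> S \<and> j = sg e then 1 else 0::complex)"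
  define p where "p = Prm (ph hp) aa zz cc"
  have "gam n H p e = pz p e" if e: "e \<in> S" for e
  proof (rule gam_exact[OF rep])
    show "\<forall>A\<in>H. e \<in> A \<longrightarrow> dot n (ph p A) (pz p e) = 0"
    proof (intro ballI impI)
      fix A assume A: "A \<in> H" "e \<in> A"
      have "sg e \<notin> K A" unfolding K_def using e A by blast
      then have hz: "ph hp A (sg e) = 0" using hp(1) A unfolding L_def by blast
      have "dot n (ph p A) (pz p e) = (\<Sum>j<n. if j = sg e then ph hp A j else 0)"
        unfolding dot_def p_def zz_def using e by (intro sum.cong) auto
      also have "\<dots> = ph hp A (sg e)" using sgn e by simp
      finally show "dot n (ph p A) (pz p e) = 0" using hz by simp
    qed
    show "\<forall>A\<in>H. e \<in> A \<longrightarrow> dot n (ph p A) (pa p A) = 1"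
    proof (intro ballI impI)
      fix A assume A: "A \<in> H" "e \<in> A"
      have "\<exists>a. dot n (ph hp A) a = 1" using nd A exists_a unfolding ND_def by blast
      then show "dot n (ph p A) (pa p A) = 1" unfolding p_def aa_def prm.sel by (rule someI_ex)
    qed
    show "has2 H e \<longrightarrow> dot n (ph p (f1 H e)) (pc p e) = 0 \<and> dot n (ph p (f2 H e)) (pc p e) = 1"
    proof
      assume h2: "has2 H e"
      note F1 = f1_prop[OF has2_has1[OF h2]]
      note F2 = f2_prop[OF h2]
      have "indep2 n (ph hp (f1 H e)) (ph hp (f2 H e))" using nd F1 F2 unfolding ND_def by metis
      then have "\<exists>c. dot n (ph hp (f1 H e)) c = 0 \<and> dot n (ph hp (f2 H e)) c = 1" by (rule exists_c)
      then show "dot n (ph p (f1 H e)) (pc p e) = 0 \<and> dot n (ph p (f2 H e)) (pc p e) = 1"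
        unfolding p_def cc_def prm.sel by (rule someI_ex)
    qed
  qed
  then have "ldep n (gam n H p) S = ldep n zz S" by (intro ldep_cong) (simp add: p_def)
  moreover have "\<not> ldep n zz S" using std_indep[OF fS sginj sgn] unfolding zz_def by simp
  ultimately show ?thesis by blast
qed

lemma n2_of_pair:
  assumes ne: "\<not> qp_circuit n d H {}" "A \<in> H" "B \<in> H" "A \<noteq> B"
  shows "2 \<le> n"
proof (rule ccontr)
  assume "\<not> 2 \<le> n"
  then have "n - 1 = 0" by simp
  then have "qp_type1 n H {}" using assms unfolding qp_type1_def by auto
  then show False using ne unfolding qp_circuit_def by blast
qed

lemma exists_good:
  assumes rep: "qp_rep d H" and n1: "1 \<le> n" and ne: "\<not> qp_circuit n d H {}"
  shows "\<exists>p. good n d H p"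
proof -
  define z0 where "z0 = (\<lambda>(e::nat) (j::nat). 0::complex)"
  define a0 where "a0 = (\<lambda>(A::nat set) (j::nat). 0::complex)"
  have wit: "\<forall>Q\<in>NDconds n H \<union> INconds n d H. \<exists>p\<in>UNIV. Q p"
  proof
    fix Q assume Q: "Q \<in> NDconds n H \<union> INconds n d H"
    show "\<exists>p\<in>UNIV. Q p"
    proof (cases "Q \<in> INconds n d H")
      case True
      then obtain S where S: "S \<subseteq> {1..d}" "\<not> qp_dependent n d H S" "Q = (\<lambda>p. \<not> ldep n (gam n H p) S)"
        unfolding INconds_def by blast
      then show ?thesis using indep_witness[OF rep S(1,2)] by auto
    next
      case False
      then have "Q \<in> NDconds n H" using Q by blast
      then consider (one) A where "A \<in> H" "Q = (\<lambda>p. nzv n (ph p A))"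
        | (two) A B where "A \<in> H" "B \<in> H" "A \<noteq> B" "Q = (\<lambda>p. indep2 n (ph p A) (ph p B))"
        unfolding NDconds_def by auto
      then show ?thesis
      proof cases
        case one
        define p where "p = Prm (\<lambda>C j. if j = 0 then 1 else 0) a0 z0 z0"
        have "nzv n (ph p A)" unfolding p_def nzv_def using n1 by (intro exI[of _ 0]) auto
        then show ?thesis using one by blast
      next
        case two
        have n2: "2 \<le> n" using n2_of_pair[OF ne two(1-3)] .
        define p where "p = Prm (\<lambda>C j. if C = A then (if j = 0 then 1 else 0) else (if j = 1 then 1 else 0)) a0 z0 z0"
        have "indep2 n (ph p A) (ph p B)" unfolding p_def indep2_def using n2 two(3)
          by (intro exI[of _ 0] exI[of _ 1]) auto
        then show ?thesis using two by blast
      qed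
    qed
  qed
  obtain p where "\<forall>Q\<in>NDconds n H \<union> INconds n d H. Q p"
    using gen_machine[of "NDconds n H \<union> INconds n d H" UNIV "Prm a0 a0 z0 z0"]
      finite_NDconds[OF rep] finite_INconds lopen_NDconds lopen_INconds wit by blast
  then show ?thesis using good_iff by blast
qed

lemma dot_lin_ph:
  "dot n (ph (lin p q t) A) v = dot n (ph p A) v + t * (dot n (ph q A) v - dot n (ph p A) v)"
  unfolding dot_def lin_sel
  by (simp add: algebra_simps sum.distrib sum_subtractf sum_distrib_left)

lemma rep_sub: "qp_rep d H \<Longrightarrow> A \<in> H \<Longrightarrow> A \<subseteq> {1..d}"
  unfolding qp_rep_def by (elim conjE) (erule bspec)

lemma rep_fin: "qp_rep d H \<Longrightarrow> finite H"
  unfolding qp_rep_def by (elim conjE)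

lemma real_preimage:
  assumes rep: "qp_rep d H" and n1: "1 \<le> n" and x: "x \<in> qp_realizations n d H"
  shows "\<exists>p. good n d H p \<and> phi n d H p = x"
proof -
  define xv where "xv = (\<lambda>e j. x (e, j))"
  have xc: "x \<in> cspace (idx n d)" using x unfolding qp_realizations_def by blast
  have fa: "\<forall>S\<subseteq>{1..d}. qp_dependent n d H S \<longleftrightarrow> lin_dep_family n x S"
    using x unfolding qp_realizations_def by blast
  have ldx: "lin_dep_family n x S = ldep n xv S" for S
    unfolding lin_dep_family_def ldep_def xv_def by simp
  have faith: "qp_dependent n d H S \<longleftrightarrow> ldep n xv S" if "S \<subseteq> {1..d}" for S
    using fa that ldx by blast
  have fH: "finite H" using rep by (rule rep_fin)
  have Asub: "A \<subseteq> {1..d}" if "A \<in> H" for A using rep that by (rule rep_sub)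
  have maxI: "\<exists>I\<subseteq>A. \<not> qp_dependent n d H I \<and> card I < n \<and>
      (\<forall>h. (\<forall>i\<in>I. dot n h (xv i) = 0) \<longrightarrow> (\<forall>e\<in>A. dot n h (xv e) = 0))" if A: "A \<in> H" for A
  proof -
    have fA: "finite A" using Asub[OF A] by (rule finite_subset) simp
    obtain I where I: "I \<subseteq> A" "\<not> ldep n xv I"
      "\<forall>e\<in>A. \<forall>h. (\<forall>i\<in>I. dot n h (xv i) = 0) \<longrightarrow> dot n h (xv e) = 0"
      using max_indep_subset[OF fA, where v=xv and n=n] by blast
    have IS: "I \<subseteq> {1..d}" using I(1) Asub[OF A] by blast
    have nd: "\<not> qp_dependent n d H I" using faith[OF IS] I(2) by blast
    have "card (I \<inter> A) < n" using indep_A[OF IS nd A] .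
    moreover have "I \<inter> A = I" using I(1) by blast
    ultimately have cI: "card I < n" by simp
    have sp: "\<forall>h. (\<forall>i\<in>I. dot n h (xv i) = 0) \<longrightarrow> (\<forall>e\<in>A. dot n h (xv e) = 0)"
      using I(3) by blast
    show ?thesis using I(1) nd cI sp by blast
  qed
  have normal: "\<exists>h. nzv n h \<and> (\<forall>e\<in>A. dot n h (xv e) = 0)" if A: "A \<in> H" for A
  proof -
    obtain I where I: "I \<subseteq> A" "\<not> qp_dependent n d H I" "card I < n"
      "\<forall>h. (\<forall>i\<in>I. dot n h (xv i) = 0) \<longrightarrow> (\<forall>e\<in>A. dot n h (xv e) = 0)"
      using maxI[OF A] by blast
    have "I \<subseteq> {1..d}" using I(1) Asub[OF A] by blast
    then have fI: "finite I" by (rule finite_subset) simp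
    obtain h where "nzv n h" "\<forall>i\<in>I. dot n h (xv i) = 0" using normal_exists[OF fI I(3)] by blast
    then show ?thesis using I(4) by blast
  qed
  define Lx where "Lx = {p. \<forall>A\<in>H. \<forall>e\<in>A. dot n (ph p A) (xv e) = 0}"
  have Lclosed: "lin p q t \<in> Lx" if "p \<in> Lx" "q \<in> Lx" for p q t
    using that unfolding Lx_def by (simp add: dot_lin_ph)
  define z0 where "z0 = (\<lambda>(e::nat) (j::nat). 0::complex)"
  define a0 where "a0 = (\<lambda>(A::nat set) (j::nat). 0::complex)"
  have dot0: "dot n (\<lambda>j. 0) v = 0" for v unfolding dot_def by simp
  have p0: "Prm a0 a0 z0 z0 \<in> Lx" unfolding Lx_def a0_def by (simp add: dot0)
  have mk: "Prm (\<lambda>C. if C = A then u else if C = B then v else (\<lambda>j. 0)) a0 z0 z0 \<in> Lx"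
    if "\<forall>e\<in>A. dot n u (xv e) = 0" "\<forall>e\<in>B. dot n v (xv e) = 0" for A B u v
    using that unfolding Lx_def by (simp add: dot0)
  have pairwit: "\<exists>u v. indep2 n u v \<and> (\<forall>e\<in>A. dot n u (xv e) = 0) \<and> (\<forall>e\<in>B. dot n v (xv e) = 0)"
    if AB: "A \<in> H" "B \<in> H" "A \<noteq> B" for A B
  proof -
    obtain IA where IA: "IA \<subseteq> A" "\<not> qp_dependent n d H IA" "card IA < n"
      "\<forall>h. (\<forall>i\<in>IA. dot n h (xv i) = 0) \<longrightarrow> (\<forall>e\<in>A. dot n h (xv e) = 0)"
      using maxI[OF AB(1)] by blast
    obtain IB where IB: "IB \<subseteq> B" "\<not> qp_dependent n d H IB" "card IB < n"
      "\<forall>h. (\<forall>i\<in>IB. dot n h (xv i) = 0) \<longrightarrow> (\<forall>e\<in>B. dot n h (xv e) = 0)"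
      using maxI[OF AB(2)] by blast
    have "IA \<subseteq> {1..d}" using IA(1) Asub[OF AB(1)] by blast
    then have fIA: "finite IA" by (rule finite_subset) simp
    have "IB \<subseteq> {1..d}" using IB(1) Asub[OF AB(2)] by blast
    then have fIB: "finite IB" by (rule finite_subset) simp
    obtain u where u: "nzv n u" "\<forall>e\<in>A. dot n u (xv e) = 0" using normal[OF AB(1)] by blast
    obtain v where v: "nzv n v" "\<forall>e\<in>B. dot n v (xv e) = 0" using normal[OF AB(2)] by blast
    show ?thesis
    proof (cases "card IA + 1 < n")
      case True
      obtain u1 u2 where uu: "indep2 n u1 u2" "\<forall>i\<in>IA. dot n u1 (xv i) = 0 \<and> dot n u2 (xv i) = 0"
        using two_normals[OF fIA True] by blast
      have u1: "\<forall>e\<in>A. dot n u1 (xv e) = 0" using IA(4) uu(2) by blast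
      have u2: "\<forall>e\<in>A. dot n u2 (xv e) = 0" using IA(4) uu(2) by blast
      have "indep2 n u1 v \<or> indep2 n u2 v" using indep2_trans[OF v(1)] uu(1) by blast
      then show ?thesis using u1 u2 v(2) by blast
    next
      case cA: False
      show ?thesis
      proof (cases "card IB + 1 < n")
        case True
        obtain v1 v2 where vv: "indep2 n v1 v2" "\<forall>i\<in>IB. dot n v1 (xv i) = 0 \<and> dot n v2 (xv i) = 0"
          using two_normals[OF fIB True] by blast
        have v1: "\<forall>e\<in>B. dot n v1 (xv e) = 0" using IB(4) vv(2) by blast
        have v2: "\<forall>e\<in>B. dot n v2 (xv e) = 0" using IB(4) vv(2) by blast
        have "indep2 n v1 u \<or> indep2 n v2 u" using indep2_trans[OF u(1)] vv(1) by blast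
        then have "indep2 n u v1 \<or> indep2 n u v2" using indep2_sym by blast
        then show ?thesis using v1 v2 u(2) by blast
      next
        case cB: False
        show ?thesis
        proof (cases "indep2 n u v")
          case True
          then show ?thesis using u v by blast
        next
          case False
          obtain lam where lam: "\<forall>j<n. u j = lam * v j" using not_indep2_scale[OF v(1) False] by blast
          have uB: "\<forall>e\<in>B. dot n u (xv e) = 0"
            using v(2) dot_scale[OF lam] by simp
          have cIA: "card IA = n - 1" using IA(3) cA by simp
          have cIB: "card IB = n - 1" using IB(3) cB by simp
          obtain e where e: "e \<in> IB - A" "\<not> qp_dependent n d H (insert e IA)"
            using comb_lemma[OF rep AB IA(1,2) cIA IB(1,2) cIB n1] by blast
          have eIA: "e \<notin> IA" using e IA(1) by blast
          have cI: "card (insert e IA) = n" using eIA fIA cIA n1 by simp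
          have "\<forall>i\<in>insert e IA. dot n u (xv i) = 0" using u(2) uB e IA(1) IB(1) by blast
          then have "ldep n xv (insert e IA)"
            using cI fIA u(1) by (intro ldep_hyp) auto
          moreover have "insert e IA \<subseteq> {1..d}" using e IA(1) IB(1) Asub[OF AB(1)] Asub[OF AB(2)] by blast
          ultimately have "qp_dependent n d H (insert e IA)" using faith by blast
          then show ?thesis using e by blast
        qed
      qed
    qed
  qed
  have wit: "\<forall>Q\<in>NDconds n H. \<exists>p\<in>Lx. Q p"
  proof
    fix Q assume "Q \<in> NDconds n H"
    then consider (one) A where "A \<in> H" "Q = (\<lambda>p. nzv n (ph p A))"
      | (two) A B where "A \<in> H" "B \<in> H" "A \<noteq> B" "Q = (\<lambda>p. indep2 n (ph p A) (ph p B))"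
      unfolding NDconds_def by auto
    then show "\<exists>p\<in>Lx. Q p"
    proof cases
      case one
      obtain h where h: "nzv n h" "\<forall>e\<in>A. dot n h (xv e) = 0" using normal[OF one(1)] by blast
      have "Prm (\<lambda>C. if C = A then h else if C = A then h else (\<lambda>j. 0)) a0 z0 z0 \<in> Lx"
        using mk h(2) by blast
      moreover have "nzv n (ph (Prm (\<lambda>C. if C = A then h else if C = A then h else (\<lambda>j. 0)) a0 z0 z0) A)"
        using h(1) by simp
      ultimately show ?thesis using one(2) by blast
    next
      case two
      obtain u v where uv: "indep2 n u v" "\<forall>e\<in>A. dot n u (xv e) = 0" "\<forall>e\<in>B. dot n v (xv e) = 0"
        using pairwit[OF two(1-3)] by blast
      have "Prm (\<lambda>C. if C = A then u else if C = B then v else (\<lambda>j. 0)) a0 z0 z0 \<in> Lx"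
        using mk uv(2,3) by blast
      moreover have "indep2 n (ph (Prm (\<lambda>C. if C = A then u else if C = B then v else (\<lambda>j. 0)) a0 z0 z0) A)
          (ph (Prm (\<lambda>C. if C = A then u else if C = B then v else (\<lambda>j. 0)) a0 z0 z0) B)"
        using uv(1) two(3) by simp
      ultimately show ?thesis using two(4) by blast
    qed
  qed
  obtain hp where hp: "hp \<in> Lx" "\<forall>Q\<in>NDconds n H. Q hp"
    using gen_machine[OF finite_NDconds[OF rep] lopen_NDconds wit p0 Lclosed] by blast
  have nd: "ND n H hp" using hp(2) ND_iff by blast
  define aa where "aa = (\<lambda>A. SOME a. dot n (ph hp A) a = 1)"
  define cc where "cc = (\<lambda>e. SOME c. dot n (ph hp (f1 H e)) c = 0 \<and> dot n (ph hp (f2 H e)) c = 1)"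
  define p where "p = Prm (ph hp) aa xv cc"
  have gx: "gam n H p e = pz p e" for e
  proof (rule gam_exact[OF rep])
    show "\<forall>A\<in>H. e \<in> A \<longrightarrow> dot n (ph p A) (pz p e) = 0"
      using hp(1) unfolding Lx_def p_def by simp
    show "\<forall>A\<in>H. e \<in> A \<longrightarrow> dot n (ph p A) (pa p A) = 1"
    proof (intro ballI impI)
      fix A assume A: "A \<in> H" "e \<in> A"
      have "\<exists>a. dot n (ph hp A) a = 1" using nd A exists_a unfolding ND_def by blast
      then show "dot n (ph p A) (pa p A) = 1" unfolding p_def aa_def prm.sel by (rule someI_ex)
    qed
    show "has2 H e \<longrightarrow> dot n (ph p (f1 H e)) (pc p e) = 0 \<and> dot n (ph p (f2 H e)) (pc p e) = 1"
    proof
      assume h2: "has2 H e"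
      note F1 = f1_prop[OF has2_has1[OF h2]]
      note F2 = f2_prop[OF h2]
      have "indep2 n (ph hp (f1 H e)) (ph hp (f2 H e))" using nd F1 F2 unfolding ND_def by metis
      then have "\<exists>c. dot n (ph hp (f1 H e)) c = 0 \<and> dot n (ph hp (f2 H e)) c = 1" by (rule exists_c)
      then show "dot n (ph p (f1 H e)) (pc p e) = 0 \<and> dot n (ph p (f2 H e)) (pc p e) = 1"
        unfolding p_def cc_def prm.sel by (rule someI_ex)
    qed
  qed
  have gx': "gam n H p e = xv e" for e using gx[of e] unfolding p_def by simp
  have "phi n d H p = x"
  proof
    fix k :: "nat \<times> nat"
    obtain i j where k: "k = (i, j)" by (cases k)
    show "phi n d H p k = x k"
    proof (cases "(i, j) \<in> idx n d")
      case True
      then show ?thesis unfolding k phi_def using gx' by (simp add: xv_def)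
    next
      case False
      then show ?thesis unfolding k phi_def using xc unfolding cspace_def by simp
    qed
  qed
  moreover have "good n d H p"
    unfolding good_def
  proof (intro conjI allI impI)
    show "ND n H p" using nd unfolding ND_def p_def by simp
    fix S assume S: "S \<subseteq> {1..d} \<and> \<not> qp_dependent n d H S"
    then have "\<not> ldep n xv S" using faith by blast
    moreover have "gam n H p = xv" by (rule ext) (rule gx')
    then have "ldep n (gam n H p) S = ldep n xv S" by simp
    ultimately show "\<not> ldep n (gam n H p) S" by simp
  qed
  ultimately show ?thesis by blast
qed

lemma pf_pal:
  assumes "p \<in> poly_funs I" "\<forall>k\<in>I. pal (\<lambda>q. Phi q k)"
  shows "pal (\<lambda>q. p (Phi q))"
  using assms
proof (induction rule: poly_funs.induct)
  case (pconst c) show ?case by (rule pal_const)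
next
  case (pvar k) then show ?case by blast
next
  case (padd p q) then show ?case by (simp add: pal_add)
next
  case (pmult p q) then show ?case by (simp add: pal_mult)
qed

theorem corollary3p9:
  fixes n d :: nat and H :: "nat set set"
  assumes "1 \<le> n" and "n \<le> d"
    and "qp_rep d H"
    and "qp_matroid_rank_n n d H"
  shows "qp_realizations n d H \<noteq> {} \<and>
         zariski_irreducible (idx n d) (matroid_variety n d H)"
proof -
  note n1 = assms(1) and rep = assms(3)
  have ne: "\<not> qp_circuit n d H {}"
    using assms(4) unfolding qp_matroid_rank_n_def circuit_matroid_def by blast
  obtain p0 where p0: "good n d H p0" using exists_good[OF rep n1 ne] by blast
  have Gne: "qp_realizations n d H \<noteq> {}" using good_real[OF rep ne p0] by blast
  define G where "G = qp_realizations n d H"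
  define V where "V = matroid_variety n d H"
  have Vdef: "V = zariski_closure (idx n d) G" unfolding V_def G_def matroid_variety_def by simp
  have Gc: "G \<subseteq> cspace (idx n d)" unfolding G_def qp_realizations_def by blast
  have GV: "G \<subseteq> V" unfolding Vdef zariski_closure_def using Gc by blast
  have Vc: "V \<subseteq> cspace (idx n d)" unfolding Vdef zariski_closure_def by blast
  have key: "\<exists>x\<in>G. pp x \<noteq> 0" if v: "v \<in> V" "pp \<in> poly_funs (idx n d)" "pp v \<noteq> 0" for v pp
    using v unfolding Vdef zariski_closure_def by blast
  have irr: "V \<subseteq> A \<or> V \<subseteq> B"
    if AB: "zariski_closed (idx n d) A" "zariski_closed (idx n d) B" "V \<subseteq> A \<union> B" for A B
  proof (rule ccontr)
    assume nAB: "\<not> (V \<subseteq> A \<or> V \<subseteq> B)"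
    obtain PA where PA: "PA \<subseteq> poly_funs (idx n d)" "A = {x \<in> cspace (idx n d). \<forall>p\<in>PA. p x = 0}"
      using AB(1) unfolding zariski_closed_def by blast
    obtain PB where PB: "PB \<subseteq> poly_funs (idx n d)" "B = {x \<in> cspace (idx n d). \<forall>p\<in>PB. p x = 0}"
      using AB(2) unfolding zariski_closed_def by blast
    obtain va where va: "va \<in> V" "va \<notin> A" using nAB by blast
    then obtain pa where pa: "pa \<in> PA" "pa va \<noteq> 0" using PA Vc by blast
    obtain x where x: "x \<in> G" "pa x \<noteq> 0" using key[of va pa] va(1) pa PA(1) by blast
    obtain vb where vb: "vb \<in> V" "vb \<notin> B" using nAB by blast
    then obtain pb where pb: "pb \<in> PB" "pb vb \<noteq> 0" using PB Vc by blast
    obtain y where y: "y \<in> G" "pb y \<noteq> 0" using key[of vb pb] vb(1) pb PB(1) by blast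
    obtain px where px: "good n d H px" "phi n d H px = x"
      using real_preimage[OF rep n1] x(1) unfolding G_def by blast
    obtain py where py: "good n d H py" "phi n d H py = y"
      using real_preimage[OF rep n1] y(1) unfolding G_def by blast
    have f1: "finite {t. \<not> good n d H (lin px py t)}"
      using lopen_good[OF rep] px(1) unfolding lopen_def by blast
    have palA: "pal (\<lambda>q. pa (phi n d H q))"
      using pa(1) PA(1) by (intro pf_pal[of pa "idx n d"]) (auto simp: pal_phi)
    have palB: "pal (\<lambda>q. pb (phi n d H q))"
      using pb(1) PB(1) by (intro pf_pal[of pb "idx n d"]) (auto simp: pal_phi)
    have f2: "finite {t. pa (phi n d H (lin px py t)) = 0}"
      using pal_zeros[OF palA, of px py 0] x(2) px(2) by (simp add: lin_0)
    have f3: "finite {t. pb (phi n d H (lin px py t)) = 0}"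
      using pal_zeros[OF palB, of px py 1] y(2) py(2) by (simp add: lin_1)
    obtain t where t: "t \<notin> {t. \<not> good n d H (lin px py t)} \<union> {t. pa (phi n d H (lin px py t)) = 0}
        \<union> {t. pb (phi n d H (lin px py t)) = 0}"
      using exists_good_t[OF finite_UnI[OF finite_UnI[OF f1 f2] f3]] by blast
    define q where "q = lin px py t"
    have "good n d H q" using t unfolding q_def by blast
    then have "phi n d H q \<in> G" unfolding G_def by (rule good_real[OF rep ne])
    then have "phi n d H q \<in> A \<union> B" using GV AB(3) by blast
    then show False
    proof
      assume "phi n d H q \<in> A"
      then have "pa (phi n d H q) = 0" using PA(2) pa(1) by blast
      then show False using t unfolding q_def by blast
    next
      assume "phi n d H q \<in> B"
      then have "pb (phi n d H q) = 0" using PB(2) pb(1) by blast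
      then show False using t unfolding q_def by blast
    qed
  qed
  have "V \<noteq> {}" using Gne GV unfolding G_def by blast
  then have "zariski_irreducible (idx n d) V" unfolding zariski_irreducible_def using irr by blast
  then show ?thesis using Gne unfolding V_def by blast
qed

end
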